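(* Let $N\ge 2$, let $v_1,\dots,v_N$ be distinct real numbers and let $p(v_1),\dots,p(v_N)>0$ with $\sum_{n}p(v_n)=1$ be the prior distribution of the payoff $\tilde v$. Let $\lambda>0$, $\sigma_Z>0$, $T>0$, and let $G$ be the CDF of $N(0,\sigma_Z^2T)$. Consider the informed trader's problem $$\max_{p(\cdot|\cdot),\,q(\cdot)}\ \int \mathbb E[\tilde v|s]\,G^{-1}(Q(s))\,q(s)\,ds-\lambda\Big\{\sum_{n=1}^N\int \log\big(p(v_n|s)\big)p(v_n|s)q(s)\,ds-\sum_{n=1}^N\log\big(p(v_n)\big)p(v_n)\Big\}$$ subject to $\sum_{n=1}^N p(v_n|s)=1$ for every $s$ and $\int p(v_n|s)q(s)\,ds=p(v_n)$ for every $1\le n\le N$, over continuous signal structures as described in the context. Then: (i) The optimal posterior probabilities are $$p(v_n|s)=\frac{e^{\frac1\lambda[v_nG^{-1}(Q(s))+\mu_n]}}{\sum_{n'=1}^N e^{\frac1\lambda[v_{n'}G^{-1}(Q(s))+\mu_{n'}]}},\qquad s\in\operatorname{support}(q),\ n\in\{1,\dots,N\},$$ where a vector $(\mu_1,\dots,\mu_N)\in\mathbb R^N$ such that the Bayes plausibility constraint $\int p(v_n|s)q(s)\,ds=p(v_n)$, $1\le n\le N$, holds exists and is unique up to adding a common constant to all coordinates. (ii) Any continuous signal $\tilde s$ such that $s\mapsto\mathbb E[\tilde v|s]$ is strictly increasing achieves the same optimal value $$\lambda\,\mathbb E\Big[\log\Big(\sum_{n=1}^N e^{(v_n\tilde z+\mu_n)/\lambda}\Big)\Big]+\lambda\sum_{n=1}^N\log\big(p(v_n)\big)p(v_n)-\sum_{n=1}^N\mu_np(v_n),$$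 where $\tilde z\sim N(0,\sigma_Z^2T)$ and $(\mu_1,\dots,\mu_N)$ is as in (i). (iii) Under the optimal posteriors of (i), the conditional expected payoff $\mathbb E[\tilde v|\tilde s]$ has the same distribution as $$\frac{\sum_{n=1}^N v_n e^{(v_n\tilde z+\mu_n)/\lambda}}{\sum_{n=1}^N e^{(v_n\tilde z+\mu_n)/\lambda}},\qquad \tilde z\sim N(0,\sigma_Z^2T);$$ in particular, any continuous signal $\tilde s$ leads to the same distribution of the expected payoff.
   Context: A continuous signal structure consists of a probability density $q$ on $\mathbb R$ (the marginal density of the signal $\tilde s$, with CDF $Q$) together with posterior probabilities $p(v_n|s)\ge 0$, $s\in\operatorname{support}(q)$, of the payoff given the signal; one writes $\mathbb E[\tilde v|s]=\sum_{n}v_np(v_n|s)$, and signals are restricted to those for which $s\mapsto\mathbb E[\tilde v|s]$ is strictly increasing on $\operatorname{support}(q)$. The objective is the informed trader's unconditional expected profit in the continuous-time Kyle–Back equilibrium (with noise trades $\sigma_Z B_t$ on $[0,T]$) minus the mutual-information cost $\lambda I(\tilde s;\tilde v)$ of acquiring the signal. *)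

theory Defs
  imports "HOL-Probability.Probability"
begin

text \<open>Payoff values v 1..v N, prior pr 1..pr N, cost parameter lam,
  sd = standard deviation of the noise-trade total sigma_Z * sqrt T.\<close>

definition normal_meas :: "real \<Rightarrow> real measure" where
  "normal_meas sd = density lborel (\<lambda>x. ennreal (normal_density 0 sd x))"

definition G :: "real \<Rightarrow> real \<Rightarrow> real" where
  "G sd x = cdf (normal_meas sd) x"

definition Ginv :: "real \<Rightarrow> real \<Rightarrow> real" where
  "Ginv sd u = (THE x. G sd x = u)"

definition sig_meas :: "(real \<Rightarrow> real) \<Rightarrow> real measure" where
  "sig_meas q = density lborel (\<lambda>s. ennreal (q s))"

definition sigQ :: "(real \<Rightarrow> real) \<Rightarrow> real \<Rightarrow> real" where
  "sigQ q s = cdf (sig_meas q) s"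

definition is_density :: "(real \<Rightarrow> real) \<Rightarrow> bool" where
  "is_density q \<longleftrightarrow> q \<in> borel_measurable borel \<and> (\<forall>s. 0 \<le> q s)
     \<and> integrable lborel q \<and> (LINT s|lborel. q s) = 1"

definition supp :: "(real \<Rightarrow> real) \<Rightarrow> real set" where
  "supp q = {s. 0 < q s}"

definition cond_mean :: "nat \<Rightarrow> (nat \<Rightarrow> real) \<Rightarrow> (nat \<Rightarrow> real \<Rightarrow> real) \<Rightarrow> real \<Rightarrow> real" where
  "cond_mean N v p s = (\<Sum>n\<in>{1..N}. v n * p n s)"

definition signal_structure :: "nat \<Rightarrow> (nat \<Rightarrow> real) \<Rightarrow> (nat \<Rightarrow> real \<Rightarrow> real) \<Rightarrow> (real \<Rightarrow> real) \<Rightarrow> bool" where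
  "signal_structure N v p q \<longleftrightarrow> is_density q
     \<and> (\<forall>n\<in>{1..N}. p n \<in> borel_measurable borel)
     \<and> (\<forall>s\<in>supp q. (\<forall>n\<in>{1..N}. 0 \<le> p n s) \<and> (\<Sum>n\<in>{1..N}. p n s) = 1)
     \<and> strict_mono_on (supp q) (cond_mean N v p)"

definition bayes_plausible :: "nat \<Rightarrow> (nat \<Rightarrow> real) \<Rightarrow> (nat \<Rightarrow> real \<Rightarrow> real) \<Rightarrow> (real \<Rightarrow> real) \<Rightarrow> bool" where
  "bayes_plausible N pr p q \<longleftrightarrow> (\<forall>n\<in>{1..N}. (LINT s|lborel. p n s * q s) = pr n)"

text \<open>Expected profit minus lam times mutual information.\<close>
definition objective :: "nat \<Rightarrow> (nat \<Rightarrow> real) \<Rightarrow> (nat \<Rightarrow> real) \<Rightarrow> real \<Rightarrow> real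
    \<Rightarrow> (nat \<Rightarrow> real \<Rightarrow> real) \<Rightarrow> (real \<Rightarrow> real) \<Rightarrow> real" where
  "objective N v pr lam sd p q =
     (LINT s|lborel. cond_mean N v p s * Ginv sd (sigQ q s) * q s)
     - lam * ((\<Sum>n\<in>{1..N}. LINT s|lborel. ln (p n s) * p n s * q s)
              - (\<Sum>n\<in>{1..N}. ln (pr n) * pr n))"

definition opt_post :: "nat \<Rightarrow> (nat \<Rightarrow> real) \<Rightarrow> real \<Rightarrow> real \<Rightarrow> (nat \<Rightarrow> real)
    \<Rightarrow> (real \<Rightarrow> real) \<Rightarrow> nat \<Rightarrow> real \<Rightarrow> real" where
  "opt_post N v lam sd mu q n s =
     exp ((v n * Ginv sd (sigQ q s) + mu n) / lam)
     / (\<Sum>m\<in>{1..N}. exp ((v m * Ginv sd (sigQ q s) + mu m) / lam))"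

definition opt_value :: "nat \<Rightarrow> (nat \<Rightarrow> real) \<Rightarrow> (nat \<Rightarrow> real) \<Rightarrow> real \<Rightarrow> real
    \<Rightarrow> (nat \<Rightarrow> real) \<Rightarrow> real" where
  "opt_value N v pr lam sd mu =
     lam * (LINT z|normal_meas sd. ln (\<Sum>n\<in>{1..N}. exp ((v n * z + mu n) / lam)))
     + lam * (\<Sum>n\<in>{1..N}. ln (pr n) * pr n) - (\<Sum>n\<in>{1..N}. mu n * pr n)"

definition logit_mean :: "nat \<Rightarrow> (nat \<Rightarrow> real) \<Rightarrow> real \<Rightarrow> (nat \<Rightarrow> real) \<Rightarrow> real \<Rightarrow> real" where
  "logit_mean N v lam mu z =
     (\<Sum>n\<in>{1..N}. v n * exp ((v n * z + mu n) / lam))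
     / (\<Sum>n\<in>{1..N}. exp ((v n * z + mu n) / lam))"

end

theory Submission
  imports Defs
begin

lemma normal_meas_rd: assumes "0 < sd" shows "real_distribution (normal_meas sd)"
  unfolding real_distribution_def real_distribution_axioms_def normal_meas_def
  using prob_space_normal_density[OF assms, of 0] by simp

lemma G_singleton: assumes "0 < sd" shows "measure (normal_meas sd) {x} = 0"
proof -
  have "{x} \<in> null_sets (normal_meas sd)"
    unfolding normal_meas_def
  proof (subst null_sets_density_iff)
    have "AE t in lborel. t \<notin> {x}" by (rule AE_not_in) (simp add: countable_imp_null_set_lborel)
    then have "AE t in lborel. t \<in> {x} \<longrightarrow> ennreal (normal_density 0 sd t) = 0"
      by eventually_elim auto
    then show "{x} \<in> sets lborel \<and> (AE t in lborel. t \<in> {x} \<longrightarrow> ennreal (normal_density 0 sd t) = 0)"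
      by simp
  qed simp
  then show ?thesis by (simp add: measure_eq_0_null_sets)
qed

lemma G_cont: assumes "0 < sd" shows "isCont (G sd) x"
proof -
  interpret real_distribution "normal_meas sd" by (rule normal_meas_rd[OF assms])
  show ?thesis unfolding G_def[abs_def] using isCont_cdf G_singleton[OF assms] by simp
qed

lemma G_strict: assumes "0 < sd" "x < y" shows "G sd x < G sd y"
proof -
  interpret real_distribution "normal_meas sd" by (rule normal_meas_rd[OF assms(1)])
  have "measure (normal_meas sd) {x<..y} \<noteq> 0"
  proof
    assume "measure (normal_meas sd) {x<..y} = 0"
    then have "{x<..y} \<in> null_sets (normal_meas sd)"
      by (simp add: emeasure_eq_measure null_setsI)
    then have "AE t in lborel. t \<in> {x<..y} \<longrightarrow> normal_density 0 sd t = 0"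
      unfolding normal_meas_def by (subst (asm) null_sets_density_iff) auto
    then have "AE t in lborel. t \<notin> {x<..y}"
      by eventually_elim (metis normal_density_pos[OF assms(1)] less_irrefl)
    then have "{x<..y} \<in> null_sets lborel" by (subst AE_iff_null_sets) auto
    then show False using assms(2) by auto
  qed
  then show ?thesis using cdf_diff_eq[OF assms(2)] measure_nonneg[of "normal_meas sd" "{x<..y}"]
    unfolding G_def by linarith
qed

lemma G_bot: assumes "0 < sd" shows "(G sd \<longlongrightarrow> 0) at_bot"
proof -
  interpret real_distribution "normal_meas sd" by (rule normal_meas_rd[OF assms])
  show ?thesis unfolding G_def[abs_def] using cdf_lim_at_bot by simp
qed

lemma G_top: assumes "0 < sd" shows "(G sd \<longlongrightarrow> 1) at_top"
proof -
  interpret real_distribution "normal_meas sd" by (rule normal_meas_rd[OF assms])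
  show ?thesis unfolding G_def[abs_def] using cdf_lim_at_top_prob by simp
qed

lemma G_ex: assumes "0 < sd" "0 < u" "u < 1" shows "\<exists>x. G sd x = u"
proof -
  have "eventually (\<lambda>x. G sd x < u) at_bot" using order_tendstoD(2)[OF G_bot[OF assms(1)] assms(2)] .
  then obtain a where a: "\<And>x. x \<le> a \<Longrightarrow> G sd x < u" by (auto simp: eventually_at_bot_linorder)
  have "eventually (\<lambda>x. G sd x > u) at_top" using order_tendstoD(1)[OF G_top[OF assms(1)] assms(3)] .
  then obtain b where b: "\<And>x. x \<ge> b \<Longrightarrow> G sd x > u" by (auto simp: eventually_at_top_linorder)
  have "G sd (min a b) \<le> u" "u \<le> G sd (max a b)" using a[of "min a b"] b[of "max a b"] by auto
  moreover have "continuous_on {min a b..max a b} (G sd)"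
    using G_cont[OF assms(1)] by (simp add: continuous_at_imp_continuous_on)
  moreover have "min a b \<le> max a b" by simp
  ultimately show ?thesis using IVT'[of "G sd" "min a b" u "max a b"] by blast
qed

lemma G_inj: assumes "0 < sd" "G sd x = G sd y" shows "x = y"
  using G_strict[OF assms(1), of x y] G_strict[OF assms(1), of y x] assms(2)
  by (cases x y rule: linorder_cases) auto

lemma Ginv_G: assumes "0 < sd" "0 < u" "u < 1" shows "G sd (Ginv sd u) = u"
proof -
  obtain x where x: "G sd x = u" using G_ex[OF assms] by blast
  have "G sd (THE x. G sd x = u) = u"
    by (rule theI[of _ x]) (use x G_inj[OF assms(1)] in auto)
  then show ?thesis unfolding Ginv_def .
qed

lemma G_range: assumes "0 < sd" shows "0 < G sd x" "G sd x < 1"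
proof -
  interpret real_distribution "normal_meas sd" by (rule normal_meas_rd[OF assms])
  show "0 < G sd x" using G_strict[OF assms, of "x - 1" x] cdf_nonneg[of "x - 1"] unfolding G_def by simp
  show "G sd x < 1" using G_strict[OF assms, of x "x + 1"] cdf_bounded_prob[of "x + 1"] unfolding G_def by simp
qed

lemma Ginv_le_iff: assumes "0 < sd" "0 < u" "u < 1" shows "Ginv sd u \<le> x \<longleftrightarrow> u \<le> G sd x"
proof -
  have "Ginv sd u \<le> x \<longleftrightarrow> G sd (Ginv sd u) \<le> G sd x"
    using G_strict[OF assms(1), of x "Ginv sd u"] G_strict[OF assms(1), of "Ginv sd u" x]
    by (cases "Ginv sd u" x rule: linorder_cases) auto
  then show ?thesis using Ginv_G[OF assms] by simp
qed


lemma sig_rd: assumes "is_density q" shows "real_distribution (sig_meas q)"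
proof -
  have qm: "q \<in> borel_measurable borel" and q0: "\<And>s. 0 \<le> q s" and qi: "integrable lborel q"
    and q1: "(LINT s|lborel. q s) = 1" using assms unfolding is_density_def by auto
  have "emeasure (sig_meas q) UNIV = 1"
    unfolding sig_meas_def using qm q0 qi q1
    by (simp add: emeasure_density nn_integral_eq_integral)
  then show ?thesis
    unfolding real_distribution_def real_distribution_axioms_def sig_meas_def
    by (auto intro!: prob_spaceI)
qed

lemma sigQ_single: assumes "is_density q" shows "measure (sig_meas q) {x} = 0"
proof -
  have qm: "q \<in> borel_measurable borel" using assms unfolding is_density_def by auto
  have "{x} \<in> null_sets (sig_meas q)"
    unfolding sig_meas_def
  proof (subst null_sets_density_iff)
    have "AE t in lborel. t \<notin> {x}" by (rule AE_not_in) (simp add: countable_imp_null_set_lborel)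
    then have "AE t in lborel. t \<in> {x} \<longrightarrow> ennreal (q t) = 0"
      by eventually_elim auto
    then show "{x} \<in> sets lborel \<and> (AE t in lborel. t \<in> {x} \<longrightarrow> ennreal (q t) = 0)"
      by simp
  qed (use qm in simp)
  then show ?thesis by (simp add: measure_eq_0_null_sets)
qed

lemma sigQ_cont: assumes "is_density q" shows "isCont (sigQ q) x"
proof -
  interpret real_distribution "sig_meas q" by (rule sig_rd[OF assms])
  show ?thesis unfolding sigQ_def[abs_def] using isCont_cdf sigQ_single[OF assms] by simp
qed

lemma sigQ_mono: assumes "is_density q" shows "mono (sigQ q)"
proof -
  interpret real_distribution "sig_meas q" by (rule sig_rd[OF assms])
  show ?thesis unfolding sigQ_def[abs_def] mono_def using cdf_nondecreasing by simp
qed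

lemma sigQ_meas[measurable]: assumes "is_density q" shows "sigQ q \<in> borel_measurable borel"
  by (rule borel_measurable_mono[OF sigQ_mono[OF assms]])

lemma sigQ_bot: assumes "is_density q" shows "(sigQ q \<longlongrightarrow> 0) at_bot"
proof -
  interpret real_distribution "sig_meas q" by (rule sig_rd[OF assms])
  show ?thesis unfolding sigQ_def[abs_def] using cdf_lim_at_bot by simp
qed

lemma sigQ_top: assumes "is_density q" shows "(sigQ q \<longlongrightarrow> 1) at_top"
proof -
  interpret real_distribution "sig_meas q" by (rule sig_rd[OF assms])
  show ?thesis unfolding sigQ_def[abs_def] using cdf_lim_at_top_prob by simp
qed

lemma sigQ_level: assumes "is_density q" "0 < t" "t < 1"
  shows "measure (sig_meas q) {s. sigQ q s \<le> t} = t"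
proof -
  interpret real_distribution "sig_meas q" by (rule sig_rd[OF assms(1)])
  let ?Q = "sigQ q"
  have "eventually (\<lambda>x. ?Q x < t) at_bot" using order_tendstoD(2)[OF sigQ_bot[OF assms(1)] assms(2)] .
  then obtain a where a: "\<And>x. x \<le> a \<Longrightarrow> ?Q x < t" by (auto simp: eventually_at_bot_linorder)
  have "eventually (\<lambda>x. ?Q x > t) at_top" using order_tendstoD(1)[OF sigQ_top[OF assms(1)] assms(3)] .
  then obtain b where b: "\<And>x. x \<ge> b \<Longrightarrow> ?Q x > t" by (auto simp: eventually_at_top_linorder)
  have "?Q (min a b) \<le> t" "t \<le> ?Q (max a b)" using a[of "min a b"] b[of "max a b"] by auto
  moreover have "continuous_on {min a b..max a b} ?Q"
    using sigQ_cont[OF assms(1)] by (simp add: continuous_at_imp_continuous_on)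
  moreover have "min a b \<le> max a b" by simp
  ultimately obtain s0 where s0: "?Q s0 = t" using IVT'[of ?Q "min a b" t "max a b"] by blast
  define A where "A = {s. ?Q s \<le> t}"
  have Qco: "continuous_on UNIV ?Q"
    by (simp add: continuous_at_imp_continuous_on sigQ_cont[OF assms(1)])
  have cl: "closed A" unfolding A_def
    using closed_Collect_le[OF Qco continuous_on_const] by simp
  have bdd: "bdd_above A" unfolding A_def bdd_above_def
  proof (intro exI[of _ b] ballI)
    fix x assume x: "x \<in> {s. ?Q s \<le> t}"
    show "x \<le> b"
    proof (rule ccontr)
      assume "\<not> x \<le> b"
      then have "t < ?Q x" by (intro b) simp
      with x show False by simp
    qed
  qed
  have ne: "A \<noteq> {}" using s0 unfolding A_def by auto
  define c where "c = Sup A"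
  have cA: "c \<in> A" unfolding c_def using closed_contains_Sup[OF ne bdd cl] .
  have "s0 \<le> c" unfolding c_def using s0 bdd by (intro cSup_upper) (auto simp: A_def)
  then have "t \<le> ?Q c" using monoD[OF sigQ_mono[OF assms(1)] \<open>s0 \<le> c\<close>] s0 by simp
  with cA have Qc: "?Q c = t" unfolding A_def by auto
  have "A = {..c}"
  proof
    show "A \<subseteq> {..c}" unfolding c_def using bdd by (auto intro: cSup_upper)
    show "{..c} \<subseteq> A"
    proof
      fix s assume "s \<in> {..c}"
      then have "?Q s \<le> ?Q c" using monoD[OF sigQ_mono[OF assms(1)], of s c] by simp
      then show "s \<in> A" using Qc unfolding A_def by simp
    qed
  qed
  then have "prob {s. ?Q s \<le> t} = prob {..c}" unfolding A_def by simp
  also have "\<dots> = ?Q c" by (simp add: sigQ_def cdf_def)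
  finally show ?thesis using Qc by simp
qed

lemma sigQ_AE: assumes "is_density q" shows "AE s in sig_meas q. 0 < sigQ q s \<and> sigQ q s < 1"
proof -
  interpret real_distribution "sig_meas q" by (rule sig_rd[OF assms(1)])
  have sets: "sets (sig_meas q) = sets borel" by simp
  have m: "{s. sigQ q s \<le> t} \<in> events" for t
    using sigQ_meas[OF assms] by (simp add: sets)
  have m2: "{s. 1 \<le> sigQ q s} \<in> events"
    using sigQ_meas[OF assms] by (simp add: sets)
  have z0: "prob {s. sigQ q s \<le> 0} = 0"
  proof (rule ccontr)
    let ?m = "prob {s. sigQ q s \<le> 0}"
    assume "?m \<noteq> 0"
    then have mpos: "?m > 0" by (simp add: zero_less_measure_iff)
    define e where "e = min (?m/2) (1/2)"
    have "e \<le> 1/2" by (simp add: e_def)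
    then have e2: "e < 1" by simp
    have e1: "0 < e" using mpos by (simp add: e_def)
    note e = e1 e2
    have "?m \<le> prob {s. sigQ q s \<le> e}"
      using e by (intro finite_measure_mono m) auto
    also have "\<dots> = e" using sigQ_level[OF assms e] .
    finally have le: "?m \<le> e" .
    have "?m \<le> 1" by (rule prob_le_1)
    then show False using le mpos unfolding e_def by (auto simp: min_def split: if_splits)
  qed
  have z1: "prob {s. 1 \<le> sigQ q s} = 0"
  proof (rule ccontr)
    let ?m = "prob {s. 1 \<le> sigQ q s}"
    assume "?m \<noteq> 0"
    then have mpos: "?m > 0" by (simp add: zero_less_measure_iff)
    define e where "e = min (?m/2) (1/2)"
    have ee: "e \<le> 1/2" "e \<le> ?m/2" by (simp_all add: e_def)
    have "0 < e" using mpos by (simp add: e_def)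
    then have e: "0 < 1 - e" "1 - e < 1" using ee mpos by linarith+
    have "prob {s. sigQ q s \<le> 1 - e} + ?m = prob ({s. sigQ q s \<le> 1 - e} \<union> {s. 1 \<le> sigQ q s})"
      using e m[of "1 - e"] m2 by (subst finite_measure_Union) auto
    also have "\<dots> \<le> 1" by simp
    finally show False using sigQ_level[OF assms e] ee mpos by linarith
  qed
  have "{s. sigQ q s \<le> 0} \<union> {s. 1 \<le> sigQ q s} \<in> null_sets (sig_meas q)"
    using z0 z1 m m2 by (auto simp: emeasure_eq_measure null_setsI)
  then have "AE s in sig_meas q. s \<notin> {s. sigQ q s \<le> 0} \<union> {s. 1 \<le> sigQ q s}"
    by (rule AE_not_in)
  then show ?thesis by eventually_elim auto
qed

lemma Ginv_out: assumes "0 < sd" "\<not> (0 < u \<and> u < 1)" shows "Ginv sd u = Ginv sd 0"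
proof -
  have "G sd x \<noteq> u" "G sd x \<noteq> 0" for x
    using G_range[OF assms(1), of x] assms(2) by auto
  then have "(\<lambda>x. G sd x = u) = (\<lambda>x. False)" "(\<lambda>x. G sd x = 0) = (\<lambda>x. False)"
    by (simp_all add: fun_eq_iff)
  then show ?thesis unfolding Ginv_def by simp
qed

lemma Ginv_meas[measurable]: assumes "0 < sd" shows "Ginv sd \<in> borel_measurable borel"
proof (subst borel_measurable_iff_le, intro allI)
  fix x
  define B where "B = ({0<..<1} \<inter> {..G sd x}) \<union> (if Ginv sd 0 \<le> x then - {0<..<1::real} else {})"
  have Bm: "B \<in> sets borel" unfolding B_def by (cases "Ginv sd 0 \<le> x") simp_all
  have "{w \<in> space borel. Ginv sd w \<le> x} = B"
  proof (rule set_eqI)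
    fix w
    show "w \<in> {w \<in> space borel. Ginv sd w \<le> x} \<longleftrightarrow> w \<in> B"
    proof (cases "0 < w \<and> w < 1")
      case True
      have "Ginv sd w \<le> x \<longleftrightarrow> w \<le> G sd x" using Ginv_le_iff[OF assms] True by blast
      moreover have "w \<in> B \<longleftrightarrow> w \<le> G sd x" using True unfolding B_def by auto
      ultimately show ?thesis by simp
    next
      case False
      have "Ginv sd w = Ginv sd 0" by (rule Ginv_out[OF assms False])
      moreover have "w \<in> B \<longleftrightarrow> Ginv sd 0 \<le> x" using False unfolding B_def by auto
      ultimately show ?thesis by simp
    qed
  qed
  then show "{w \<in> space borel. Ginv sd w \<le> x} \<in> sets borel" using Bm by simp
qed

lemma Z_distr: assumes "0 < sd" "is_density q"
  shows "distr (sig_meas q) borel (\<lambda>s. Ginv sd (sigQ q s)) = normal_meas sd"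
proof -
  interpret real_distribution "sig_meas q" by (rule sig_rd[OF assms(2)])
  have sets: "sets (sig_meas q) = sets borel" by simp
  have Zm: "(\<lambda>s. Ginv sd (sigQ q s)) \<in> borel_measurable (sig_meas q)"
    using Ginv_meas[OF assms(1)] sigQ_meas[OF assms(2)] by (simp add: measurable_cong_sets[OF sets refl])
  have rd: "real_distribution (distr (sig_meas q) borel (\<lambda>s. Ginv sd (sigQ q s)))"
    using Zm by simp
  have "cdf (distr (sig_meas q) borel (\<lambda>s. Ginv sd (sigQ q s))) x = G sd x" for x
  proof -
    have "cdf (distr (sig_meas q) borel (\<lambda>s. Ginv sd (sigQ q s))) x
        = prob ((\<lambda>s. Ginv sd (sigQ q s)) -` {..x} \<inter> space (sig_meas q))"
      unfolding cdf_def using Zm by (simp add: measure_distr)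
    also have "\<dots> = prob {s. sigQ q s \<le> G sd x}"
    proof (rule measure_eq_AE)
      show "AE s in sig_meas q. s \<in> (\<lambda>s. Ginv sd (sigQ q s)) -` {..x} \<inter> space (sig_meas q)
           \<longleftrightarrow> s \<in> {s. sigQ q s \<le> G sd x}"
        using sigQ_AE[OF assms(2)] by eventually_elim (auto simp: Ginv_le_iff[OF assms(1)])
      show "(\<lambda>s. Ginv sd (sigQ q s)) -` {..x} \<inter> space (sig_meas q) \<in> sets (sig_meas q)"
        by (rule measurable_sets[OF Zm]) simp
      show "{s. sigQ q s \<le> G sd x} \<in> sets (sig_meas q)"
        using sigQ_meas[OF assms(2)] by (simp add: sets)
    qed
    also have "\<dots> = G sd x" using sigQ_level[OF assms(2) G_range[OF assms(1)]] .
    finally show ?thesis .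
  qed
  then show ?thesis
    by (intro cdf_unique[OF rd normal_meas_rd[OF assms(1)]] ext) (simp add: G_def)
qed


lemma gibbs_term:
  fixes p w a S :: real
  assumes "0 \<le> p" "0 < S" "w = exp a / S"
  shows "p * a - p * ln p - p * ln S \<le> w - p"
    and "p * a - p * ln p - p * ln S = w - p \<Longrightarrow> p = w"
proof -
  have wpos: "0 < w" using assms by simp
  have lnw: "ln w = a - ln S" using assms by (simp add: ln_div)
  then have a_eq: "a = ln w + ln S" by simp
  show "p * a - p * ln p - p * ln S \<le> w - p"
  proof (cases "p = 0")
    case True then show ?thesis using wpos by simp
  next
    case False
    then have pp: "0 < p" using assms by simp
    have "p * a - p * ln p - p * ln S = p * ln (w / p)"
      using pp wpos a_eq by (simp add: ln_div algebra_simps)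
    also have "\<dots> \<le> p * (w / p - 1)"
      using pp wpos by (intro mult_left_mono ln_le_minus_one) auto
    also have "\<dots> = w - p" using pp by (simp add: field_simps)
    finally show ?thesis .
  qed
  assume eq: "p * a - p * ln p - p * ln S = w - p"
  show "p = w"
  proof (cases "p = 0")
    case True then show ?thesis using wpos eq by simp
  next
    case False
    then have pp: "0 < p" using assms by simp
    have "p * a - p * ln p - p * ln S = p * ln (w / p)"
      using pp wpos a_eq by (simp add: ln_div algebra_simps)
    with eq have "p * ln (w / p) = w - p" by simp
    moreover have "p * (w / p - 1) = w - p" using pp by (simp add: field_simps)
    ultimately have "p * ln (w / p) = p * (w / p - 1)" by simp
    then have "ln (w / p) = w / p - 1" using pp by simp
    then have "w / p = 1" using pp wpos by (intro ln_eq_minus_one) auto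
    then show ?thesis using pp by (simp add: field_simps)
  qed
qed

lemma sum_eq_termwise:
  fixes f g :: "nat \<Rightarrow> real"
  assumes "finite A" "\<forall>x\<in>A. f x \<le> g x" "sum f A = sum g A" "x \<in> A"
  shows "f x = g x"
proof (rule ccontr)
  assume "f x \<noteq> g x"
  then have "f x < g x" using assms by force
  then have "sum f A < sum g A" using assms by (intro sum_strict_mono_ex1) auto
  then show False using assms by simp
qed

lemma gibbs:
  fixes N :: nat and p a :: "nat \<Rightarrow> real"
  assumes p0: "\<forall>n\<in>{1..N}. 0 \<le> p n" and p1: "(\<Sum>n\<in>{1..N}. p n) = 1"
  shows "(\<Sum>n\<in>{1..N}. p n * a n - p n * ln (p n)) \<le> ln (\<Sum>n\<in>{1..N}. exp (a n))"
    and "(\<Sum>n\<in>{1..N}. p n * a n - p n * ln (p n)) = ln (\<Sum>n\<in>{1..N}. exp (a n)) \<Longrightarrow>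
         \<forall>n\<in>{1..N}. p n = exp (a n) / (\<Sum>m\<in>{1..N}. exp (a m))"
proof -
  define S where "S = (\<Sum>m\<in>{1..N}. exp (a m))"
  have ne: "{1..N} \<noteq> {}"
  proof
    assume "{1..N} = {}" then show False using p1 by simp
  qed
  have Spos: "0 < S" unfolding S_def using ne by (intro sum_pos) auto
  define w where "w n = exp (a n) / S" for n
  have w1: "(\<Sum>n\<in>{1..N}. w n) = 1" unfolding w_def using Spos by (simp add: sum_divide_distrib[symmetric] S_def)
  have tw: "\<forall>n\<in>{1..N}. p n * a n - p n * ln (p n) - p n * ln S \<le> w n - p n"
    using gibbs_term(1)[OF _ Spos] p0 w_def by auto
  have eqs: "(\<Sum>n\<in>{1..N}. p n * a n - p n * ln (p n) - p n * ln S)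
      = (\<Sum>n\<in>{1..N}. p n * a n - p n * ln (p n)) - ln S"
    using p1 by (simp add: sum_subtractf sum_distrib_right[symmetric])
  have eqw: "(\<Sum>n\<in>{1..N}. w n - p n) = 0" using w1 p1 by (simp add: sum_subtractf)
  have "(\<Sum>n\<in>{1..N}. p n * a n - p n * ln (p n) - p n * ln S) \<le> (\<Sum>n\<in>{1..N}. w n - p n)"
    using tw by (intro sum_mono) auto
  then show "(\<Sum>n\<in>{1..N}. p n * a n - p n * ln (p n)) \<le> ln (\<Sum>n\<in>{1..N}. exp (a n))"
    using eqs eqw S_def by simp
  assume eq: "(\<Sum>n\<in>{1..N}. p n * a n - p n * ln (p n)) = ln (\<Sum>n\<in>{1..N}. exp (a n))"
  then have "(\<Sum>n\<in>{1..N}. p n * a n - p n * ln (p n) - p n * ln S) = (\<Sum>n\<in>{1..N}. w n - p n)"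
    using eqs eqw S_def by simp
  then have "\<forall>n\<in>{1..N}. p n * a n - p n * ln (p n) - p n * ln S = w n - p n"
    using sum_eq_termwise[OF _ tw] by auto
  then show "\<forall>n\<in>{1..N}. p n = exp (a n) / (\<Sum>m\<in>{1..N}. exp (a m))"
    using gibbs_term(2)[OF _ Spos] p0 w_def S_def by auto
qed


definition lse :: "nat \<Rightarrow> (nat \<Rightarrow> real) \<Rightarrow> real \<Rightarrow> (nat \<Rightarrow> real) \<Rightarrow> real \<Rightarrow> real" where
  "lse N v lam mu z = ln (\<Sum>n\<in>{1..N}. exp ((v n * z + mu n) / lam))"

lemma lse_meas[measurable]: "lse N v lam mu \<in> borel_measurable borel"
  unfolding lse_def[abs_def] by measurable

lemma normal_prob: assumes "0 < sd" shows "prob_space (normal_meas sd)"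
  using normal_meas_rd[OF assms] by (simp add: real_distribution_def)

lemma normal_int_iff: assumes "f \<in> borel_measurable borel"
  shows "integrable (normal_meas sd) f \<longleftrightarrow> integrable lborel (\<lambda>x. normal_density 0 sd x * f x)"
  unfolding normal_meas_def using assms by (subst integrable_density) auto

lemma normal_int_abs: assumes "0 < sd" shows "integrable (normal_meas sd) (\<lambda>z. \<bar>z\<bar>)"
  using integrable_normal_moment_abs[OF assms, of 0 1] by (subst normal_int_iff) auto

lemma normal_int_id: assumes "0 < sd" shows "integrable (normal_meas sd) (\<lambda>z. z)"
  using integrable_normal_moment_nz_1[OF assms, of 0] by (subst normal_int_iff) auto

lemma normal_mean: assumes "0 < sd" shows "(LINT z|normal_meas sd. z) = 0"
proof -
  have "(LINT z|normal_meas sd. z) = (LINT z|lborel. normal_density 0 sd z * z)"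
    unfolding normal_meas_def by (subst integral_density) auto
  also have "\<dots> = 0" using integral_normal_moment_nz_1[OF assms, of 0] .
  finally show ?thesis .
qed

lemma normal_int_const: assumes "0 < sd" shows "integrable (normal_meas sd) (\<lambda>z. c)"
proof -
  interpret prob_space "normal_meas sd" by (rule normal_prob[OF assms])
  show ?thesis by simp
qed

lemma lse_bound:
  assumes "1 \<le> N" "0 < lam"
  shows "\<bar>lse N v lam mu z\<bar> \<le> ln (real N) + ((\<Sum>n\<in>{1..N}. \<bar>v n\<bar>) * \<bar>z\<bar> + (\<Sum>n\<in>{1..N}. \<bar>mu n\<bar>)) / lam"
proof -
  define K where "K = (\<Sum>n\<in>{1..N}. \<bar>v n\<bar>)"
  define M where "M = (\<Sum>n\<in>{1..N}. \<bar>mu n\<bar>)"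
  define B where "B = (K * \<bar>z\<bar> + M) / lam"
  have tb: "\<bar>(v n * z + mu n) / lam\<bar> \<le> B" if n: "n \<in> {1..N}" for n
  proof -
    have "\<bar>v n\<bar> \<le> K" unfolding K_def using n by (intro member_le_sum) auto
    moreover have "\<bar>mu n\<bar> \<le> M" unfolding M_def using n by (intro member_le_sum) auto
    ultimately have "\<bar>v n * z + mu n\<bar> \<le> K * \<bar>z\<bar> + M"
    proof -
      have "\<bar>v n * z + mu n\<bar> \<le> \<bar>v n\<bar> * \<bar>z\<bar> + \<bar>mu n\<bar>"
        using abs_triangle_ineq[of "v n * z" "mu n"] by (simp add: abs_mult)
      also have "\<dots> \<le> K * \<bar>z\<bar> + M"
        using \<open>\<bar>v n\<bar> \<le> K\<close> \<open>\<bar>mu n\<bar> \<le> M\<close> by (intro add_mono mult_right_mono) auto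
      finally show ?thesis .
    qed
    then show ?thesis unfolding B_def using assms(2) by (simp add: abs_div divide_right_mono)
  qed
  define S where "S = (\<Sum>n\<in>{1..N}. exp ((v n * z + mu n) / lam))"
  have "S \<le> (\<Sum>n\<in>{1..N}. exp B)" unfolding S_def
  proof (intro sum_mono)
    fix n assume "n \<in> {1..N}"
    then show "exp ((v n * z + mu n) / lam) \<le> exp B" using abs_le_D1[OF tb] by simp
  qed
  also have "\<dots> = real N * exp B" by simp
  finally have Sup: "S \<le> real N * exp B" .
  have "exp ((v 1 * z + mu 1) / lam) \<le> S" unfolding S_def using assms(1)
    by (intro member_le_sum) auto
  moreover have "exp (- B) \<le> exp ((v 1 * z + mu 1) / lam)" using abs_le_D2[OF tb[of 1]] assms(1) by simp
  ultimately have Slo: "exp (- B) \<le> S" by (rule order_trans[rotated])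
  have Spos: "0 < S" using Slo exp_gt_zero[of "- B"] by linarith
  have "ln S \<le> ln (real N * exp B)" using Sup Spos by simp
  also have "\<dots> = ln (real N) + B" using assms(1) by (simp add: ln_mult)
  finally have u: "ln S \<le> ln (real N) + B" .
  have "ln (exp (- B)) \<le> ln S" using Slo Spos by (subst ln_le_cancel_iff) auto
  then have "- B \<le> ln S" by simp
  moreover have "0 \<le> ln (real N)" using assms(1) by simp
  ultimately have "\<bar>ln S\<bar> \<le> ln (real N) + B" using u by linarith
  then show ?thesis unfolding lse_def S_def[symmetric] B_def K_def M_def .
qed

lemma lse_int:
  assumes "1 \<le> N" "0 < lam" "0 < sd"
  shows "integrable (normal_meas sd) (lse N v lam mu)"
proof -
  define K where "K = (\<Sum>n\<in>{1..N}. \<bar>v n\<bar>)"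
  define M where "M = (\<Sum>n\<in>{1..N}. \<bar>mu n\<bar>)"
  have i: "integrable (normal_meas sd) (\<lambda>z. ln (real N) + (K * \<bar>z\<bar> + M) / lam)"
    by (simp add: normal_int_abs[OF assms(3)] normal_int_const[OF assms(3)])
  have m: "lse N v lam mu \<in> borel_measurable (normal_meas sd)"
    unfolding normal_meas_def by simp
  have b: "AE z in normal_meas sd. norm (lse N v lam mu z) \<le> norm (ln (real N) + (K * \<bar>z\<bar> + M) / lam)"
  proof (intro AE_I2)
    fix z
    have "\<bar>lse N v lam mu z\<bar> \<le> ln (real N) + (K * \<bar>z\<bar> + M) / lam"
      using lse_bound[OF assms(1,2)] unfolding K_def M_def by blast
    moreover have "0 \<le> ln (real N) + (K * \<bar>z\<bar> + M) / lam"
      using calculation by linarith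
    ultimately show "norm (lse N v lam mu z) \<le> norm (ln (real N) + (K * \<bar>z\<bar> + M) / lam)"
      by simp
  qed
  show ?thesis using Bochner_Integration.integrable_bound[OF i m b] .
qed

definition Zs :: "real \<Rightarrow> (real \<Rightarrow> real) \<Rightarrow> real \<Rightarrow> real" where
  "Zs sd q s = Ginv sd (sigQ q s)"

lemma Zs_meas: assumes "0 < sd" "is_density q" shows "Zs sd q \<in> borel_measurable borel"
  unfolding Zs_def[abs_def] using Ginv_meas[OF assms(1)] sigQ_meas[OF assms(2)]
  by (rule measurable_compose[rotated])

lemma transfer:
  assumes sd: "0 < sd" and q: "is_density q"
    and f: "f \<in> borel_measurable borel" "integrable (normal_meas sd) f"
  shows "integrable lborel (\<lambda>s. f (Zs sd q s) * q s)"
    "(LINT s|lborel. f (Zs sd q s) * q s) = (LINT z|normal_meas sd. f z)"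
proof -
  have qm: "q \<in> borel_measurable borel" and q0: "\<And>s. 0 \<le> q s"
    using q unfolding is_density_def by auto
  have sets: "sets (sig_meas q) = sets borel" unfolding sig_meas_def by simp
  have Zm: "Zs sd q \<in> measurable (sig_meas q) borel"
    using Zs_meas[OF sd q] by (simp add: measurable_cong_sets[OF sets refl])
  have fZ: "(\<lambda>s. f (Zs sd q s)) \<in> borel_measurable borel"
    using Zs_meas[OF sd q] f(1) by (rule measurable_compose)
  have D: "distr (sig_meas q) borel (Zs sd q) = normal_meas sd"
    using Z_distr[OF sd q] unfolding Zs_def[abs_def] .
  have "integrable (sig_meas q) (\<lambda>s. f (Zs sd q s))"
    using integrable_distr_eq[OF Zm f(1)] f(2) D by simp
  then have "integrable lborel (\<lambda>s. q s *\<^sub>R f (Zs sd q s))"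
    unfolding sig_meas_def using fZ qm q0 by (subst (asm) integrable_density) auto
  then show "integrable lborel (\<lambda>s. f (Zs sd q s) * q s)" by (simp add: mult.commute)
  have "(LINT z|normal_meas sd. f z) = (LINT s|sig_meas q. f (Zs sd q s))"
    using integral_distr[OF Zm f(1)] D by simp
  also have "\<dots> = (LINT s|lborel. q s *\<^sub>R f (Zs sd q s))"
    unfolding sig_meas_def using fZ qm q0 by (subst integral_density) auto
  finally show "(LINT s|lborel. f (Zs sd q s) * q s) = (LINT z|normal_meas sd. f z)"
    by (simp add: mult.commute)
qed


lemma xlnx_bound: fixes x :: real assumes "0 \<le> x" "x \<le> 1" shows "\<bar>ln x * x\<bar> \<le> 1"
proof (cases "x = 0")
  case True then show ?thesis by simp
next
  case False
  then have xp: "0 < x" using assms by simp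
  have "ln x \<le> 0" using xp assms by simp
  then have u: "ln x * x \<le> 0" using xp by (simp add: mult_nonpos_nonneg)
  have "ln (1 / x) \<le> 1 / x - 1" using xp by (intro ln_le_minus_one) simp
  then have "- ln x \<le> 1 / x - 1" using xp by (simp add: ln_div)
  then have "- ln x * x \<le> (1 / x - 1) * x" using xp by (intro mult_right_mono) auto
  moreover have "(1 / x - 1) * x = 1 - x" using xp by (simp add: field_simps)
  ultimately have "- ln x * x \<le> 1 - x" by simp
  then show ?thesis using u assms by linarith
qed

context
  fixes N :: nat and v pr :: "nat \<Rightarrow> real" and lam sd :: real and q :: "real \<Rightarrow> real"
    and mu :: "nat \<Rightarrow> real"
  assumes N1: "1 \<le> N" and lam: "0 < lam" and sd: "0 < sd" and q: "is_density q"
begin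

lemma q_facts: "q \<in> borel_measurable borel" "\<And>s. 0 \<le> q s" "integrable lborel q"
  using q unfolding is_density_def by auto

lemma q_zero: "s \<notin> supp q \<Longrightarrow> q s = 0"
  using q_facts(2)[of s] unfolding supp_def by simp

lemma Zm: "Zs sd q \<in> borel_measurable borel" by (rule Zs_meas[OF sd q])

lemma core:
  fixes p :: "nat \<Rightarrow> real \<Rightarrow> real"
  assumes pm: "\<forall>n\<in>{1..N}. p n \<in> borel_measurable borel"
    and pv: "\<forall>s\<in>supp q. (\<forall>n\<in>{1..N}. 0 \<le> p n s) \<and> (\<Sum>n\<in>{1..N}. p n s) = 1"
    and bp: "bayes_plausible N pr p q"
  defines "gap \<equiv> \<lambda>s. lse N v lam mu (Zs sd q s)
     - (\<Sum>n\<in>{1..N}. p n s * ((v n * Zs sd q s + mu n) / lam) - p n s * ln (p n s))"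
  shows "integrable lborel (\<lambda>s. gap s * q s)" "\<And>s. 0 \<le> gap s * q s"
    "objective N v pr lam sd p q = opt_value N v pr lam sd mu - lam * (LINT s|lborel. gap s * q s)"
proof -
  let ?Z = "Zs sd q"
  note qm = q_facts(1) and q0 = q_facts(2) and qi = q_facts(3)
  have pb: "0 \<le> p n s \<and> p n s \<le> 1" if "s \<in> supp q" "n \<in> {1..N}" for s n
  proof -
    have "0 \<le> p n s" using pv that by auto
    moreover have "p n s \<le> (\<Sum>m\<in>{1..N}. p m s)"
      using pv that by (intro member_le_sum) auto
    ultimately show ?thesis using pv that by auto
  qed
  define K where "K = (\<Sum>n\<in>{1..N}. \<bar>v n\<bar>)"
  have Zabs: "integrable lborel (\<lambda>s. (\<lambda>z. K * \<bar>z\<bar>) (?Z s) * q s)"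
    using transfer(1)[OF sd q, of "\<lambda>z. K * \<bar>z\<bar>"] normal_int_abs[OF sd] by simp
  have cmm: "cond_mean N v p \<in> borel_measurable borel"
    unfolding cond_mean_def[abs_def]
  proof (intro borel_measurable_sum)
    fix n assume "n \<in> {1..N}"
    then have "p n \<in> borel_measurable borel" using pm by auto
    then show "(\<lambda>x. v n * p n x) \<in> borel_measurable borel" by simp
  qed
  have i_cm: "integrable lborel (\<lambda>s. cond_mean N v p s * ?Z s * q s)"
  proof (rule Bochner_Integration.integrable_bound[OF Zabs])
    show "(\<lambda>s. cond_mean N v p s * ?Z s * q s) \<in> borel_measurable lborel"
      using cmm Zm qm by simp
    show "AE s in lborel. norm (cond_mean N v p s * ?Z s * q s) \<le> norm ((\<lambda>z. K * \<bar>z\<bar>) (?Z s) * q s)"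
    proof (intro AE_I2)
      fix s
      show "norm (cond_mean N v p s * ?Z s * q s) \<le> norm ((\<lambda>z. K * \<bar>z\<bar>) (?Z s) * q s)"
      proof (cases "s \<in> supp q")
        case False then show ?thesis using q_zero by simp
      next
        case True
        have "\<bar>cond_mean N v p s\<bar> \<le> (\<Sum>n\<in>{1..N}. \<bar>v n * p n s\<bar>)"
          unfolding cond_mean_def by (rule sum_abs)
        also have "\<dots> \<le> K" unfolding K_def
          using pb[OF True] by (intro sum_mono) (auto simp: abs_mult intro!: mult_left_le)
        finally have "\<bar>cond_mean N v p s\<bar> \<le> K" .
        then have "\<bar>cond_mean N v p s\<bar> * (\<bar>?Z s\<bar> * q s) \<le> K * (\<bar>?Z s\<bar> * q s)"
          using q0[of s] by (intro mult_right_mono) auto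
        moreover have "0 \<le> K" unfolding K_def by (simp add: sum_nonneg)
        ultimately show ?thesis using q0[of s] by (simp add: abs_mult mult.assoc)
      qed
    qed
  qed
  have i_pq: "integrable lborel (\<lambda>s. p n s * q s)" if n: "n \<in> {1..N}" for n
  proof (rule Bochner_Integration.integrable_bound[OF qi])
    have pnm: "p n \<in> borel_measurable borel" using pm n by auto
    then show "(\<lambda>s. p n s * q s) \<in> borel_measurable lborel" using qm by simp
    show "AE s in lborel. norm (p n s * q s) \<le> norm (q s)"
    proof (intro AE_I2)
      fix s
      show "norm (p n s * q s) \<le> norm (q s)"
      proof (cases "s \<in> supp q")
        case False then show ?thesis using q_zero by simp
      next
        case True
        then show ?thesis using pb[OF True n] q0[of s] by (simp add: abs_mult mult_left_le_one_le)
      qed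
    qed
  qed
  have i_lpq: "integrable lborel (\<lambda>s. ln (p n s) * p n s * q s)" if n: "n \<in> {1..N}" for n
  proof (rule Bochner_Integration.integrable_bound[OF qi])
    have pnm: "p n \<in> borel_measurable borel" using pm n by auto
    then show "(\<lambda>s. ln (p n s) * p n s * q s) \<in> borel_measurable lborel" using qm by simp
    show "AE s in lborel. norm (ln (p n s) * p n s * q s) \<le> norm (q s)"
    proof (intro AE_I2)
      fix s
      show "norm (ln (p n s) * p n s * q s) \<le> norm (q s)"
      proof (cases "s \<in> supp q")
        case False then show ?thesis using q_zero by simp
      next
        case True
        have "\<bar>ln (p n s) * p n s\<bar> \<le> 1" using pb[OF True n] by (intro xlnx_bound) auto
        then show ?thesis using q0[of s] by (simp add: abs_mult mult_left_le_one_le)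
      qed
    qed
  qed
  have i_lse: "integrable lborel (\<lambda>s. lse N v lam mu (?Z s) * q s)"
    and e_lse: "(LINT s|lborel. lse N v lam mu (?Z s) * q s) = (LINT z|normal_meas sd. lse N v lam mu z)"
    using transfer[OF sd q lse_meas lse_int[OF N1 lam sd]] by auto
  have ident: "lam * (gap s * q s) = lam * (lse N v lam mu (?Z s) * q s) - cond_mean N v p s * ?Z s * q s
      - (\<Sum>n\<in>{1..N}. mu n * (p n s * q s)) + lam * (\<Sum>n\<in>{1..N}. ln (p n s) * p n s * q s)" for s
  proof -
    have t: "lam * (p n s * ((v n * ?Z s + mu n) / lam) - p n s * ln (p n s))
        = v n * p n s * ?Z s + mu n * p n s - lam * (ln (p n s) * p n s)" for n
      using lam by (simp add: field_simps)
    have "lam * (\<Sum>n\<in>{1..N}. p n s * ((v n * ?Z s + mu n) / lam) - p n s * ln (p n s))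
        = (\<Sum>n\<in>{1..N}. v n * p n s * ?Z s + mu n * p n s - lam * (ln (p n s) * p n s))"
      by (simp only: sum_distrib_left t)
    also have "\<dots> = cond_mean N v p s * ?Z s + (\<Sum>n\<in>{1..N}. mu n * p n s)
        - lam * (\<Sum>n\<in>{1..N}. ln (p n s) * p n s)"
      unfolding cond_mean_def by (simp add: sum.distrib sum_subtractf sum_distrib_left sum_distrib_right)
    finally have e: "lam * (\<Sum>n\<in>{1..N}. p n s * ((v n * ?Z s + mu n) / lam) - p n s * ln (p n s))
        = cond_mean N v p s * ?Z s + (\<Sum>n\<in>{1..N}. mu n * p n s)
        - lam * (\<Sum>n\<in>{1..N}. ln (p n s) * p n s)" .
    have "lam * (gap s * q s) = lam * lse N v lam mu (?Z s) * q s
        - lam * (\<Sum>n\<in>{1..N}. p n s * ((v n * ?Z s + mu n) / lam) - p n s * ln (p n s)) * q s"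
      unfolding gap_def by (simp add: algebra_simps)
    also have "\<dots> = lam * lse N v lam mu (?Z s) * q s
        - (cond_mean N v p s * ?Z s + (\<Sum>n\<in>{1..N}. mu n * p n s)
        - lam * (\<Sum>n\<in>{1..N}. ln (p n s) * p n s)) * q s"
      using e by simp
    also have "\<dots> = lam * (lse N v lam mu (?Z s) * q s) - cond_mean N v p s * ?Z s * q s
      - (\<Sum>n\<in>{1..N}. mu n * (p n s * q s)) + lam * (\<Sum>n\<in>{1..N}. ln (p n s) * p n s * q s)"
      by (simp add: algebra_simps sum_distrib_left sum_distrib_right)
    finally show ?thesis .
  qed
  have i_sum1: "integrable lborel (\<lambda>s. \<Sum>n\<in>{1..N}. mu n * (p n s * q s))"
    using i_pq by (intro Bochner_Integration.integrable_sum Bochner_Integration.integrable_mult_right) auto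
  have i_sum2: "integrable lborel (\<lambda>s. \<Sum>n\<in>{1..N}. ln (p n s) * p n s * q s)"
    using i_lpq by (intro Bochner_Integration.integrable_sum) auto
  have i_rhs: "integrable lborel (\<lambda>s. lam * (lse N v lam mu (?Z s) * q s) - cond_mean N v p s * ?Z s * q s
      - (\<Sum>n\<in>{1..N}. mu n * (p n s * q s)) + lam * (\<Sum>n\<in>{1..N}. ln (p n s) * p n s * q s))"
    using i_lse i_cm i_sum1 i_sum2 by (intro Bochner_Integration.integrable_add Bochner_Integration.integrable_diff Bochner_Integration.integrable_mult_right) auto
  have i_lg: "integrable lborel (\<lambda>s. lam * (gap s * q s))"
    using i_rhs unfolding ident[symmetric] .
  then show ig: "integrable lborel (\<lambda>s. gap s * q s)" using lam by simp
  show "\<And>s. 0 \<le> gap s * q s"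
  proof -
    fix s
    show "0 \<le> gap s * q s"
    proof (cases "s \<in> supp q")
      case False then show ?thesis using q_zero by simp
    next
      case True
      have "(\<Sum>n\<in>{1..N}. p n s * ((v n * ?Z s + mu n) / lam) - p n s * ln (p n s))
          \<le> ln (\<Sum>n\<in>{1..N}. exp ((v n * ?Z s + mu n) / lam))"
        using gibbs(1)[of N "\<lambda>n. p n s" "\<lambda>n. (v n * ?Z s + mu n) / lam"] pv True by auto
      then have "0 \<le> gap s" unfolding gap_def lse_def by simp
      then show ?thesis using q0[of s] by simp
    qed
  qed
  have "lam * (LINT s|lborel. gap s * q s) = (LINT s|lborel. lam * (gap s * q s))"
    by simp
  also have "\<dots> = (LINT s|lborel. lam * (lse N v lam mu (?Z s) * q s) - cond_mean N v p s * ?Z s * q s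
      - (\<Sum>n\<in>{1..N}. mu n * (p n s * q s)) + lam * (\<Sum>n\<in>{1..N}. ln (p n s) * p n s * q s))"
    unfolding ident ..
  also have "\<dots> = lam * (LINT s|lborel. lse N v lam mu (?Z s) * q s) - (LINT s|lborel. cond_mean N v p s * ?Z s * q s)
      - (\<Sum>n\<in>{1..N}. mu n * (LINT s|lborel. p n s * q s)) + lam * (\<Sum>n\<in>{1..N}. LINT s|lborel. ln (p n s) * p n s * q s)"
    using i_lse i_cm i_sum1 i_sum2 i_pq i_lpq
    by (simp add: Bochner_Integration.integral_sum Bochner_Integration.integrable_mult_right)
  also have "\<dots> = lam * (LINT z|normal_meas sd. lse N v lam mu z) - (LINT s|lborel. cond_mean N v p s * ?Z s * q s)
      - (\<Sum>n\<in>{1..N}. mu n * pr n) + lam * (\<Sum>n\<in>{1..N}. LINT s|lborel. ln (p n s) * p n s * q s)"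
    using bp e_lse unfolding bayes_plausible_def by simp
  finally have L: "lam * (LINT s|lborel. gap s * q s) = lam * (LINT z|normal_meas sd. lse N v lam mu z) - (LINT s|lborel. cond_mean N v p s * ?Z s * q s)
      - (\<Sum>n\<in>{1..N}. mu n * pr n) + lam * (\<Sum>n\<in>{1..N}. LINT s|lborel. ln (p n s) * p n s * q s)" .
  have O: "objective N v pr lam sd p q = (LINT s|lborel. cond_mean N v p s * ?Z s * q s)
     - lam * ((\<Sum>n\<in>{1..N}. LINT s|lborel. ln (p n s) * p n s * q s) - (\<Sum>n\<in>{1..N}. ln (pr n) * pr n))"
    unfolding objective_def Zs_def ..
  have V: "opt_value N v pr lam sd mu = lam * (LINT z|normal_meas sd. lse N v lam mu z)
     + lam * (\<Sum>n\<in>{1..N}. ln (pr n) * pr n) - (\<Sum>n\<in>{1..N}. mu n * pr n)"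
    unfolding opt_value_def lse_def ..
  show "objective N v pr lam sd p q = opt_value N v pr lam sd mu - lam * (LINT s|lborel. gap s * q s)"
    unfolding O V L by (simp add: algebra_simps)
qed

end


definition sm :: "nat \<Rightarrow> (nat \<Rightarrow> real) \<Rightarrow> real \<Rightarrow> (nat \<Rightarrow> real) \<Rightarrow> nat \<Rightarrow> real \<Rightarrow> real" where
  "sm N v lam mu n z = exp ((v n * z + mu n) / lam) / (\<Sum>m\<in>{1..N}. exp ((v m * z + mu m) / lam))"

lemma sm_meas[measurable]: "sm N v lam mu n \<in> borel_measurable borel"
  unfolding sm_def[abs_def] by measurable

lemma sumexp_pos: fixes v mu :: "nat \<Rightarrow> real" and z lam :: real
  shows "1 \<le> N \<Longrightarrow> 0 < (\<Sum>m\<in>{1..N}. exp ((v m * z + mu m) / lam))"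
  by (intro sum_pos) auto

lemma sm_pos: "1 \<le> N \<Longrightarrow> 0 < sm N v lam mu n z"
  unfolding sm_def using sumexp_pos[of N v z mu lam] by simp

lemma sm_sum: "1 \<le> N \<Longrightarrow> (\<Sum>n\<in>{1..N}. sm N v lam mu n z) = 1"
  unfolding sm_def using sumexp_pos[of N v z mu lam] by (simp add: sum_divide_distrib[symmetric])

lemma sm_le1: "1 \<le> N \<Longrightarrow> n \<in> {1..N} \<Longrightarrow> sm N v lam mu n z \<le> 1"
proof -
  assume N: "1 \<le> N" and n: "n \<in> {1..N}"
  have "sm N v lam mu n z \<le> (\<Sum>m\<in>{1..N}. sm N v lam mu m z)"
    using n sm_pos[OF N] by (intro member_le_sum) (auto intro: less_imp_le)
  then show ?thesis using sm_sum[OF N] by simp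
qed

lemma ln_sm: "1 \<le> N \<Longrightarrow> ln (sm N v lam mu n z) = (v n * z + mu n) / lam - lse N v lam mu z"
  unfolding sm_def lse_def using sumexp_pos[of N v z mu lam] by (simp add: ln_div)

lemma sm_shift: "\<forall>n\<in>{1..N}. mu' n = mu n + c \<Longrightarrow> 0 < lam \<Longrightarrow> n \<in> {1..N} \<Longrightarrow>
   sm N v lam mu' n z = sm N v lam mu n z"
proof -
  assume h: "\<forall>n\<in>{1..N}. mu' n = mu n + c" and lam: "0 < lam" and n: "n \<in> {1..N}"
  have e: "exp ((v m * z + mu' m) / lam) = exp ((v m * z + mu m) / lam) * exp (c / lam)" if "m \<in> {1..N}" for m
    using h that by (simp add: add_divide_distrib exp_add[symmetric] algebra_simps)
  have "(\<Sum>m\<in>{1..N}. exp ((v m * z + mu' m) / lam)) = (\<Sum>m\<in>{1..N}. exp ((v m * z + mu m) / lam)) * exp (c / lam)"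
    by (simp add: e sum_distrib_right)
  then show ?thesis unfolding sm_def using e[OF n] by simp
qed

lemma sm_int: "0 < sd \<Longrightarrow> 1 \<le> N \<Longrightarrow> n \<in> {1..N} \<Longrightarrow> integrable (normal_meas sd) (sm N v lam mu n)"
proof -
  assume sd: "0 < sd" and N: "1 \<le> N" and n: "n \<in> {1..N}"
  show ?thesis
  proof (rule Bochner_Integration.integrable_bound[OF normal_int_const[OF sd, of 1]])
    show "sm N v lam mu n \<in> borel_measurable (normal_meas sd)" unfolding normal_meas_def by simp
    show "AE z in normal_meas sd. norm (sm N v lam mu n z) \<le> norm (1::real)"
      using sm_pos[OF N] sm_le1[OF N n] by (intro AE_I2) (simp add: less_imp_le)
  qed
qed

definition Phi :: "nat \<Rightarrow> (nat \<Rightarrow> real) \<Rightarrow> real \<Rightarrow> real \<Rightarrow> (nat \<Rightarrow> real) \<Rightarrow> nat \<Rightarrow> real" where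
  "Phi N v lam sd mu n = (LINT z|normal_meas sd. sm N v lam mu n z)"

lemma opt_post_sm: "opt_post N v lam sd mu q n s = sm N v lam mu n (Zs sd q s)"
  unfolding opt_post_def sm_def Zs_def ..

context
  fixes N :: nat and v pr :: "nat \<Rightarrow> real" and lam sd :: real and q :: "real \<Rightarrow> real"
  assumes N1: "1 \<le> N" and lam: "0 < lam" and sd: "0 < sd" and q: "is_density q"
begin

lemma opt_post_meas: "opt_post N v lam sd mu q n \<in> borel_measurable borel"
  unfolding opt_post_sm[abs_def] using Zs_meas[OF sd q] sm_meas by (rule measurable_compose)

lemma opt_post_vec: "\<forall>s. (\<forall>n\<in>{1..N}. 0 \<le> opt_post N v lam sd mu q n s) \<and> (\<Sum>n\<in>{1..N}. opt_post N v lam sd mu q n s) = 1"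
  unfolding opt_post_sm using sm_pos[OF N1] sm_sum[OF N1] by (auto intro: less_imp_le)

lemma bayes_iff: "bayes_plausible N pr (opt_post N v lam sd mu q) q \<longleftrightarrow> (\<forall>n\<in>{1..N}. Phi N v lam sd mu n = pr n)"
proof -
  have "(LINT s|lborel. opt_post N v lam sd mu q n s * q s) = Phi N v lam sd mu n" if "n \<in> {1..N}" for n
    unfolding opt_post_sm Phi_def using transfer(2)[OF sd q sm_meas sm_int[OF sd N1 that]] .
  then show ?thesis unfolding bayes_plausible_def by auto
qed

lemma gap_opt_zero:
  "lse N v lam mu z - (\<Sum>n\<in>{1..N}. sm N v lam mu n z * ((v n * z + mu n) / lam) - sm N v lam mu n z * ln (sm N v lam mu n z)) = 0"
proof -
  have "(\<Sum>n\<in>{1..N}. sm N v lam mu n z * ((v n * z + mu n) / lam) - sm N v lam mu n z * ln (sm N v lam mu n z))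
     = (\<Sum>n\<in>{1..N}. sm N v lam mu n z * lse N v lam mu z)"
    by (intro sum.cong refl) (simp add: ln_sm[OF N1] algebra_simps)
  also have "\<dots> = lse N v lam mu z" using sm_sum[OF N1] by (simp add: sum_distrib_right[symmetric])
  finally show ?thesis by simp
qed

lemma objective_opt:
  assumes "bayes_plausible N pr (opt_post N v lam sd mu q) q"
  shows "objective N v pr lam sd (opt_post N v lam sd mu q) q = opt_value N v pr lam sd mu"
proof -
  note c = core[OF N1 lam sd q, where mu=mu and p="opt_post N v lam sd mu q" and pr=pr and v=v]
  have "objective N v pr lam sd (opt_post N v lam sd mu q) q = opt_value N v pr lam sd mu - lam * 0"
    using c(3)[OF _ _ assms] opt_post_meas opt_post_vec
    unfolding opt_post_sm gap_opt_zero by simp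
  then show ?thesis by simp
qed

end


context
  fixes N :: nat and v pr :: "nat \<Rightarrow> real" and lam sd :: real and q :: "real \<Rightarrow> real"
  assumes N1: "1 \<le> N" and lam: "0 < lam" and sd: "0 < sd" and q: "is_density q"
begin

lemma unique_mu:
  assumes b1: "bayes_plausible N pr (opt_post N v lam sd mu q) q"
    and b2: "bayes_plausible N pr (opt_post N v lam sd mu' q) q"
  shows "\<exists>c. \<forall>n\<in>{1..N}. mu' n = mu n + c"
proof -
  let ?P = "opt_post N v lam sd mu q" and ?P' = "opt_post N v lam sd mu' q"
  let ?Z = "Zs sd q"
  define gap1 where "gap1 = (\<lambda>s. lse N v lam mu (?Z s)
     - (\<Sum>n\<in>{1..N}. ?P' n s * ((v n * ?Z s + mu n) / lam) - ?P' n s * ln (?P' n s)))"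
  define gap2 where "gap2 = (\<lambda>s. lse N v lam mu' (?Z s)
     - (\<Sum>n\<in>{1..N}. ?P n s * ((v n * ?Z s + mu' n) / lam) - ?P n s * ln (?P n s)))"
  have pm: "\<forall>n\<in>{1..N}. opt_post N v lam sd m q n \<in> borel_measurable borel" for m
    using opt_post_meas[OF N1 lam sd q] by auto
  have pv: "\<forall>s\<in>supp q. (\<forall>n\<in>{1..N}. 0 \<le> opt_post N v lam sd m q n s) \<and> (\<Sum>n\<in>{1..N}. opt_post N v lam sd m q n s) = 1" for m
    using opt_post_vec[OF N1 lam sd q] by auto
  note c1' = core[OF N1 lam sd q pm pv b2, where mu=mu and v=v]
  note c2' = core[OF N1 lam sd q pm pv b1, where mu=mu' and v=v]
  have c1: "integrable lborel (\<lambda>s. gap1 s * q s)" "\<And>s. 0 \<le> gap1 s * q s"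
    "objective N v pr lam sd ?P' q = opt_value N v pr lam sd mu - lam * (LINT s|lborel. gap1 s * q s)"
    unfolding gap1_def by (rule c1'(1), rule c1'(2), rule c1'(3))
  have c2: "integrable lborel (\<lambda>s. gap2 s * q s)" "\<And>s. 0 \<le> gap2 s * q s"
    "objective N v pr lam sd ?P q = opt_value N v pr lam sd mu' - lam * (LINT s|lborel. gap2 s * q s)"
    unfolding gap2_def by (rule c2'(1), rule c2'(2), rule c2'(3))
  have o1: "objective N v pr lam sd ?P' q = opt_value N v pr lam sd mu'"
    using objective_opt[OF N1 lam sd q b2] .
  have o2: "objective N v pr lam sd ?P q = opt_value N v pr lam sd mu"
    using objective_opt[OF N1 lam sd q b1] .
  have I1: "0 \<le> (LINT s|lborel. gap1 s * q s)" using c1(2) by (intro integral_nonneg_AE) auto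
  have I2: "0 \<le> (LINT s|lborel. gap2 s * q s)" using c2(2) by (intro integral_nonneg_AE) auto
  have "lam * (LINT s|lborel. gap1 s * q s) + lam * (LINT s|lborel. gap2 s * q s) = 0"
    using c1(3) c2(3) o1 o2 by linarith
  moreover have "0 \<le> lam * (LINT s|lborel. gap1 s * q s)" "0 \<le> lam * (LINT s|lborel. gap2 s * q s)"
    using I1 I2 lam by simp_all
  ultimately have "lam * (LINT s|lborel. gap1 s * q s) = 0" by linarith
  then have "(LINT s|lborel. gap1 s * q s) = 0" using lam by simp
  then have ae: "AE s in lborel. gap1 s * q s = 0"
    using integral_nonneg_eq_0_iff_AE[OF c1(1)] c1(2) by auto
  obtain s where s: "0 < q s" "gap1 s * q s = 0"
  proof (rule ccontr)
    assume "\<not> thesis"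
    then have no: "\<And>s. 0 < q s \<Longrightarrow> gap1 s * q s \<noteq> 0" using that by blast
    have "AE s in lborel. q s = 0"
      using ae proof eventually_elim
      case (elim s) then show ?case using no[of s] q_facts(2)[OF N1 lam sd q, of s] by force
    qed
    then have "(LINT s|lborel. q s) = 0" by (rule integral_eq_zero_AE)
    then show False using q unfolding is_density_def by simp
  qed
  then have g0: "gap1 s = 0" by simp
  have ps: "\<forall>n\<in>{1..N}. 0 \<le> ?P' n s" "(\<Sum>n\<in>{1..N}. ?P' n s) = 1"
    using opt_post_vec[OF N1 lam sd q] by auto
  have "\<forall>n\<in>{1..N}. ?P' n s = exp ((v n * ?Z s + mu n) / lam) / (\<Sum>m\<in>{1..N}. exp ((v m * ?Z s + mu m) / lam))"
  proof -
    have "(\<Sum>n\<in>{1..N}. ?P' n s * ((v n * ?Z s + mu n) / lam) - ?P' n s * ln (?P' n s))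
       = ln (\<Sum>n\<in>{1..N}. exp ((v n * ?Z s + mu n) / lam))"
      using g0 unfolding gap1_def lse_def by linarith
    from gibbs(2)[OF ps this] show ?thesis .
  qed
  then have eqsm: "\<forall>n\<in>{1..N}. sm N v lam mu' n (?Z s) = sm N v lam mu n (?Z s)"
    unfolding opt_post_sm sm_def by simp
  show ?thesis
  proof (intro exI ballI)
    fix n assume n: "n \<in> {1..N}"
    have "ln (sm N v lam mu' n (?Z s)) = ln (sm N v lam mu n (?Z s))" using eqsm n by simp
    then have "(v n * ?Z s + mu' n) / lam - lse N v lam mu' (?Z s) = (v n * ?Z s + mu n) / lam - lse N v lam mu (?Z s)"
      unfolding ln_sm[OF N1] .
    then show "mu' n = mu n + lam * (lse N v lam mu' (?Z s) - lse N v lam mu (?Z s))"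
      using lam by (simp add: field_simps)
  qed
qed

end


definition EL :: "nat \<Rightarrow> (nat \<Rightarrow> real) \<Rightarrow> real \<Rightarrow> real \<Rightarrow> (nat \<Rightarrow> real) \<Rightarrow> real" where
  "EL N v lam sd mu = (LINT z|normal_meas sd. lse N v lam mu z)"

definition FF :: "nat \<Rightarrow> (nat \<Rightarrow> real) \<Rightarrow> (nat \<Rightarrow> real) \<Rightarrow> real \<Rightarrow> real \<Rightarrow> (nat \<Rightarrow> real) \<Rightarrow> real" where
  "FF N v pr lam sd mu = lam * EL N v lam sd mu - (\<Sum>n\<in>{1..N}. mu n * pr n)"

context
  fixes N :: nat and v pr :: "nat \<Rightarrow> real" and lam sd :: real
  assumes N1: "1 \<le> N" and lam: "0 < lam" and sd: "0 < sd"
begin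

lemma lse_le:
  assumes "\<forall>m\<in>{1..N}. mu m \<le> mu' m + D"
  shows "lse N v lam mu z \<le> lse N v lam mu' z + D / lam"
proof -
  have pt: "exp ((v m * z + mu m) / lam) \<le> exp ((v m * z + mu' m) / lam) * exp (D / lam)" if "m \<in> {1..N}" for m
  proof -
    have "(v m * z + mu m) / lam \<le> (v m * z + mu' m) / lam + D / lam"
      using assms that lam by (simp add: add_divide_distrib[symmetric] divide_right_mono)
    then show ?thesis by (simp add: exp_add[symmetric])
  qed
  have "(\<Sum>m\<in>{1..N}. exp ((v m * z + mu m) / lam)) \<le> (\<Sum>m\<in>{1..N}. exp ((v m * z + mu' m) / lam) * exp (D / lam))"
    using pt by (intro sum_mono) auto
  then have "(\<Sum>m\<in>{1..N}. exp ((v m * z + mu m) / lam)) \<le> (\<Sum>m\<in>{1..N}. exp ((v m * z + mu' m) / lam)) * exp (D / lam)"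
    by (simp add: sum_distrib_right)
  then have "ln (\<Sum>m\<in>{1..N}. exp ((v m * z + mu m) / lam)) \<le> ln ((\<Sum>m\<in>{1..N}. exp ((v m * z + mu' m) / lam)) * exp (D / lam))"
    using sumexp_pos[OF N1] by (subst ln_le_cancel_iff) auto
  also have "\<dots> = ln (\<Sum>m\<in>{1..N}. exp ((v m * z + mu' m) / lam)) + D / lam"
    using ln_mult_pos[OF sumexp_pos[OF N1, of v z mu' lam] exp_gt_zero[of "D / lam"]] by simp
  finally show ?thesis unfolding lse_def .
qed

lemma normal_integral_const: "(LINT z|normal_meas sd. c) = (c::real)"
proof -
  have "(LINT z|normal_meas sd. c) = (LINT z|lborel. normal_density 0 sd z * c)"
    unfolding normal_meas_def by (subst integral_density) auto
  also have "\<dots> = (LINT z|lborel. normal_density 0 sd z) * c"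
    by (simp add: integrable_normal_density[OF sd])
  also have "\<dots> = c" using integral_normal_density[OF sd] by simp
  finally show ?thesis .
qed

lemma EL_le:
  assumes "\<forall>m\<in>{1..N}. mu m \<le> mu' m + D"
  shows "EL N v lam sd mu \<le> EL N v lam sd mu' + D / lam"
proof -
  have "EL N v lam sd mu \<le> (LINT z|normal_meas sd. lse N v lam mu' z + D / lam)"
    unfolding EL_def using lse_le[OF assms] lse_int[OF N1 lam sd]
      Bochner_Integration.integrable_add[OF lse_int[OF N1 lam sd] normal_int_const[OF sd]]
    by (intro integral_mono) auto
  also have "\<dots> = EL N v lam sd mu' + D / lam"
    unfolding EL_def
    by (simp add: Bochner_Integration.integral_add[OF lse_int[OF N1 lam sd] normal_int_const[OF sd]] normal_integral_const del: lebesgue_integral_const)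
  finally show ?thesis .
qed

lemma EL_lip: "\<bar>EL N v lam sd y - EL N v lam sd x\<bar> \<le> (\<Sum>n\<in>{1..N}. \<bar>y n - x n\<bar>) / lam"
proof -
  define D where "D = (\<Sum>n\<in>{1..N}. \<bar>y n - x n\<bar>)"
  have d: "\<bar>y m - x m\<bar> \<le> D" if "m \<in> {1..N}" for m
    unfolding D_def using that by (intro member_le_sum) auto
  have "EL N v lam sd y \<le> EL N v lam sd x + D / lam"
  proof (intro EL_le ballI)
    fix m assume "m \<in> {1..N}"
    from abs_le_D1[OF d[OF this]] show "y m \<le> x m + D" by simp
  qed
  moreover have "EL N v lam sd x \<le> EL N v lam sd y + D / lam"
  proof (intro EL_le ballI)
    fix m assume "m \<in> {1..N}"
    from abs_le_D2[OF d[OF this]] show "x m \<le> y m + D" by simp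
  qed
  ultimately show ?thesis unfolding D_def[symmetric] by linarith
qed

lemma FF_cont: "continuous_on UNIV (FF N v pr lam sd)"
proof (intro continuous_at_imp_continuous_on ballI)
  fix x :: "nat \<Rightarrow> real"
  define h where "h y = (\<Sum>n\<in>{1..N}. \<bar>y n - x n\<bar>) / lam" for y :: "nat \<Rightarrow> real"
  have hc0: "continuous_on UNIV (\<lambda>y::nat\<Rightarrow>real. \<Sum>n\<in>{1..N}. \<bar>y n - x n\<bar>)"
  proof (rule continuous_on_sum)
    fix n :: nat
    show "continuous_on UNIV (\<lambda>y::nat\<Rightarrow>real. \<bar>y n - x n\<bar>)"
      by (rule continuous_on_rabs[OF continuous_on_diff[OF continuous_on_product_coordinates continuous_on_const]])
  qed
  have hc: "continuous_on UNIV h" unfolding h_def[abs_def]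
    by (rule continuous_on_divide[OF hc0 continuous_on_const]) (use lam in simp)
  then have "isCont h x" by (simp add: continuous_on_eq_continuous_at)
  then have hl0: "(h \<longlongrightarrow> h x) (at x)" by (simp add: isCont_def)
  have hx: "h x = 0" unfolding h_def by simp
  have lo: "((\<lambda>y. EL N v lam sd x - h y) \<longlongrightarrow> EL N v lam sd x - h x) (at x)"
    by (rule tendsto_diff[OF tendsto_const hl0])
  have up: "((\<lambda>y. EL N v lam sd x + h y) \<longlongrightarrow> EL N v lam sd x + h x) (at x)"
    by (rule tendsto_add[OF tendsto_const hl0])
  have b1: "\<forall>\<^sub>F y in at x. EL N v lam sd x - h y \<le> EL N v lam sd y"
  proof (rule always_eventually, rule allI)
    fix y
    have "\<bar>EL N v lam sd y - EL N v lam sd x\<bar> \<le> h y" unfolding h_def by (rule EL_lip)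
    then show "EL N v lam sd x - h y \<le> EL N v lam sd y" by (simp add: abs_le_iff)
  qed
  have b2: "\<forall>\<^sub>F y in at x. EL N v lam sd y \<le> EL N v lam sd x + h y"
  proof (rule always_eventually, rule allI)
    fix y
    have "\<bar>EL N v lam sd y - EL N v lam sd x\<bar> \<le> h y" unfolding h_def by (rule EL_lip)
    then show "EL N v lam sd y \<le> EL N v lam sd x + h y" by (simp add: abs_le_iff)
  qed
  have "(EL N v lam sd \<longlongrightarrow> EL N v lam sd x) (at x)"
    using tendsto_sandwich[OF b1 b2] lo up unfolding hx by simp
  then have c1: "isCont (EL N v lam sd) x" by (simp add: isCont_def)
  have "continuous_on UNIV (\<lambda>mu::nat\<Rightarrow>real. \<Sum>n\<in>{1..N}. mu n * pr n)"
  proof (rule continuous_on_sum)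
    fix n :: nat
    show "continuous_on UNIV (\<lambda>mu::nat\<Rightarrow>real. mu n * pr n)"
      by (rule continuous_on_mult[OF continuous_on_product_coordinates continuous_on_const])
  qed
  then have c2: "isCont (\<lambda>mu::nat\<Rightarrow>real. \<Sum>n\<in>{1..N}. mu n * pr n) x"
    by (simp add: continuous_on_eq_continuous_at)
  have "isCont (\<lambda>mu. lam * EL N v lam sd mu - (\<Sum>n\<in>{1..N}. mu n * pr n)) x"
    by (rule continuous_diff[OF continuous_mult[OF continuous_const c1] c2])
  then show "isCont (FF N v pr lam sd) x" unfolding FF_def[abs_def] .
qed

lemma EL_coercive: assumes k: "k \<in> {1..N}" shows "mu k \<le> lam * EL N v lam sd mu"
proof -
  have pt: "(v k / lam) * z + mu k / lam \<le> lse N v lam mu z" for z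
  proof -
    have "exp ((v k * z + mu k) / lam) \<le> (\<Sum>m\<in>{1..N}. exp ((v m * z + mu m) / lam))"
      using k by (intro member_le_sum) auto
    then have "ln (exp ((v k * z + mu k) / lam)) \<le> lse N v lam mu z"
      unfolding lse_def using sumexp_pos[OF N1] by (subst ln_le_cancel_iff) auto
    then show ?thesis by (simp add: add_divide_distrib)
  qed
  have i1: "integrable (normal_meas sd) (\<lambda>z. (v k / lam) * z + mu k / lam)"
    by (rule Bochner_Integration.integrable_add[OF Bochner_Integration.integrable_mult_right[OF normal_int_id[OF sd]] normal_int_const[OF sd]])
  have "(LINT z|normal_meas sd. (v k / lam) * z + mu k / lam) \<le> EL N v lam sd mu"
    unfolding EL_def by (rule integral_mono[OF i1 lse_int[OF N1 lam sd] pt])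
  moreover have "(LINT z|normal_meas sd. (v k / lam) * z + mu k / lam) = mu k / lam"
  proof -
    have "(LINT z|normal_meas sd. (v k / lam) * z + mu k / lam) = (LINT z|normal_meas sd. (v k / lam) * z) + (LINT z|normal_meas sd. mu k / lam)"
      by (rule Bochner_Integration.integral_add[OF Bochner_Integration.integrable_mult_right[OF normal_int_id[OF sd]] normal_int_const[OF sd]])
    also have "(LINT z|normal_meas sd. (v k / lam) * z) = (v k / lam) * (LINT z|normal_meas sd. z)"
      using Bochner_Integration.integral_mult_right[of "v k / lam" "normal_meas sd" "\<lambda>z. z"] normal_int_id[OF sd] by simp
    finally show ?thesis using normal_mean[OF sd] normal_integral_const[of "mu k / lam"] by simp
  qed
  ultimately show ?thesis using lam by (simp add: field_simps)
qed

lemma lse_shift: "lse N v lam (\<lambda>n. mu n + c) z = lse N v lam mu z + c / lam"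
proof -
  have "(\<Sum>m\<in>{1..N}. exp ((v m * z + (mu m + c)) / lam)) = (\<Sum>m\<in>{1..N}. exp ((v m * z + mu m) / lam)) * exp (c / lam)"
  proof -
    have "exp ((v m * z + (mu m + c)) / lam) = exp ((v m * z + mu m) / lam) * exp (c / lam)" for m
    proof -
      have "(v m * z + (mu m + c)) / lam = (v m * z + mu m) / lam + c / lam" by (simp add: add_divide_distrib)
      then show ?thesis by (simp add: exp_add)
    qed
    then show ?thesis by (simp add: sum_distrib_right)
  qed
  then show ?thesis unfolding lse_def
    using ln_mult_pos[OF sumexp_pos[OF N1, of v z mu lam] exp_gt_zero[of "c / lam"]] by simp
qed

lemma lse_agree: "\<forall>n\<in>{1..N}. mu n = mu' n \<Longrightarrow> lse N v lam mu z = lse N v lam mu' z"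
  unfolding lse_def by (intro arg_cong[where f=ln] sum.cong) auto

end


context
  fixes N :: nat and v pr :: "nat \<Rightarrow> real" and lam sd :: real
  assumes N1: "1 \<le> N" and lam: "0 < lam" and sd: "0 < sd"
    and prpos: "\<forall>n\<in>{1..N}. 0 < pr n" and prsum: "(\<Sum>n\<in>{1..N}. pr n) = 1"
begin

lemma EL_shift: "EL N v lam sd (\<lambda>n. mu n + c) = EL N v lam sd mu + c / lam"
proof -
  have "EL N v lam sd (\<lambda>n. mu n + c) = (LINT z|normal_meas sd. lse N v lam mu z + c / lam)"
    unfolding EL_def lse_shift[OF N1 lam sd] ..
  also have "\<dots> = EL N v lam sd mu + c / lam"
    unfolding EL_def
    by (simp add: Bochner_Integration.integral_add[OF lse_int[OF N1 lam sd] normal_int_const[OF sd]]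
        normal_integral_const[OF N1 lam sd] del: lebesgue_integral_const)
  finally show ?thesis .
qed

lemma FF_shift: "FF N v pr lam sd (\<lambda>n. mu n + c) = FF N v pr lam sd mu"
proof -
  have "(\<Sum>n\<in>{1..N}. (mu n + c) * pr n) = (\<Sum>n\<in>{1..N}. mu n * pr n) + c"
    using prsum by (simp add: algebra_simps sum.distrib sum_distrib_left[symmetric])
  then show ?thesis unfolding FF_def EL_shift using lam by (simp add: algebra_simps)
qed

lemma FF_agree: "\<forall>n\<in>{1..N}. mu n = mu' n \<Longrightarrow> FF N v pr lam sd mu = FF N v pr lam sd mu'"
proof -
  assume h: "\<forall>n\<in>{1..N}. mu n = mu' n"
  have e: "lse N v lam mu = lse N v lam mu'" by (rule ext) (rule lse_agree[OF N1 lam sd h])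
  have "EL N v lam sd mu = EL N v lam sd mu'" unfolding EL_def e ..
  moreover have "(\<Sum>n\<in>{1..N}. mu n * pr n) = (\<Sum>n\<in>{1..N}. mu' n * pr n)" using h by (intro sum.cong) auto
  ultimately show ?thesis unfolding FF_def by simp
qed

definition "W = (\<Sum>n\<in>{1..N}. 1 / pr n)"

lemma W_ge: "j \<in> {1..N} \<Longrightarrow> 1 / pr j \<le> W"
proof -
  assume j: "j \<in> {1..N}"
  have "\<forall>x\<in>{1..N}. 0 \<le> 1 / pr x" using prpos by (simp add: less_imp_le)
  then show ?thesis unfolding W_def using j by (intro member_le_sum) auto
qed

lemma FF_bound:
  assumes m1: "mu 1 = 0"
  shows "0 \<le> FF N v pr lam sd mu" "\<And>j. j \<in> {1..N} \<Longrightarrow> \<bar>mu j\<bar> \<le> FF N v pr lam sd mu * W"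
proof -
  let ?F = "FF N v pr lam sd mu"
  have fin: "finite (mu ` {1..N})" and ne: "mu ` {1..N} \<noteq> {}" using N1 by auto
  obtain k where k: "k \<in> {1..N}" "mu k = Max (mu ` {1..N})" using Max_in[OF fin ne] by auto
  have kmax: "mu n \<le> mu k" if "n \<in> {1..N}" for n using k Max_ge[OF fin] that by auto
  have "mu k - (\<Sum>n\<in>{1..N}. mu n * pr n) \<le> ?F"
    unfolding FF_def using EL_coercive[OF N1 lam sd k(1)] by simp
  moreover have "mu k - (\<Sum>n\<in>{1..N}. mu n * pr n) = (\<Sum>n\<in>{1..N}. pr n * (mu k - mu n))"
    using prsum by (simp add: algebra_simps sum_subtractf sum_distrib_left[symmetric])
  ultimately have Fge: "(\<Sum>n\<in>{1..N}. pr n * (mu k - mu n)) \<le> ?F" by simp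
  have tn: "0 \<le> pr n * (mu k - mu n)" if "n \<in> {1..N}" for n
    using prpos kmax that by (simp add: less_imp_le)
  have "0 \<le> (\<Sum>n\<in>{1..N}. pr n * (mu k - mu n))" by (intro sum_nonneg tn)
  then have F0: "0 \<le> ?F" using Fge by linarith
  then show "0 \<le> ?F" .
  have dj: "mu k - mu j \<le> ?F * W" if j: "j \<in> {1..N}" for j
  proof -
    have "pr j * (mu k - mu j) \<le> (\<Sum>n\<in>{1..N}. pr n * (mu k - mu n))"
      using j tn by (intro member_le_sum) auto
    then have "pr j * (mu k - mu j) \<le> ?F" using Fge by linarith
    then have "(mu k - mu j) * pr j \<le> ?F" by (simp add: mult.commute)
    moreover have pj: "0 < pr j" using prpos j by auto
    ultimately have "mu k - mu j \<le> ?F / pr j" by (subst pos_le_divide_eq[OF pj])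
    also have "\<dots> = ?F * (1 / pr j)" by simp
    also have "\<dots> \<le> ?F * W" using W_ge[OF j] F0 by (intro mult_left_mono) auto
    finally show ?thesis .
  qed
  fix j assume j: "j \<in> {1..N}"
  have one: "1 \<in> {1..N}" using N1 by simp
  have "mu j \<le> mu k" using kmax[OF j] .
  moreover have "mu k \<le> ?F * W" using dj[OF one] m1 by simp
  moreover have "- mu j \<le> ?F * W" using dj[OF j] kmax[OF one] m1 by simp
  ultimately show "\<bar>mu j\<bar> \<le> ?F * W" by simp
qed

lemma exists_min: "\<exists>m. \<forall>mu. FF N v pr lam sd m \<le> FF N v pr lam sd mu"
proof -
  let ?F = "FF N v pr lam sd"
  define z0 :: "nat \<Rightarrow> real" where "z0 = (\<lambda>_. 0)"
  define R where "R = ?F z0 * W"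
  have W0: "0 \<le> W" unfolding W_def using prpos by (intro sum_nonneg) (auto simp: less_imp_le)
  have F00: "0 \<le> ?F z0" using FF_bound(1)[of z0] by (simp add: z0_def)
  have R0: "0 \<le> R" unfolding R_def using F00 W0 by simp
  define S where "S i = (if i \<in> {2..N} then {-R..R} else {0::real})" for i :: nat
  define K where "K = PiE UNIV S"
  have "compactin (product_topology (\<lambda>i. euclidean) UNIV) K"
    unfolding K_def compactin_PiE by (auto simp: S_def)
  then have cK: "compact K" by (simp add: euclidean_product_topology)
  have z0K: "z0 \<in> K" unfolding K_def S_def z0_def using R0 by (auto simp: PiE_iff)
  have "continuous_on K ?F" using FF_cont[OF N1 lam sd] by (rule continuous_on_subset) simp
  then obtain m where mK: "m \<in> K" and mmin: "\<And>y. y \<in> K \<Longrightarrow> ?F m \<le> ?F y"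
    using continuous_attains_inf[OF cK _] z0K by blast
  show ?thesis
  proof (intro exI allI)
    fix mu :: "nat \<Rightarrow> real"
    define mu' where "mu' n = (if n \<in> {1..N} then mu n - mu 1 else 0)" for n
    have "?F mu' = ?F (\<lambda>n. mu n + (- mu 1))" by (intro FF_agree) (auto simp: mu'_def)
    also have "\<dots> = ?F mu" by (rule FF_shift)
    finally have Feq: "?F mu' = ?F mu" .
    have m1: "mu' 1 = 0" using N1 by (simp add: mu'_def)
    show "?F m \<le> ?F mu"
    proof (cases "?F mu' \<le> ?F z0")
      case True
      have "mu' \<in> K" unfolding K_def
      proof (simp add: PiE_iff, intro allI)
        fix i
        show "mu' i \<in> S i"
        proof (cases "i \<in> {2..N}")
          case True
          then have i: "i \<in> {1..N}" by auto
          have "\<bar>mu' i\<bar> \<le> ?F mu' * W" by (rule FF_bound(2)[where mu=mu', OF m1 i])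
          also have "\<dots> \<le> ?F z0 * W" using True W0 \<open>?F mu' \<le> ?F z0\<close> by (intro mult_right_mono) auto
          finally show ?thesis unfolding S_def R_def using True by (simp add: abs_le_iff)
        next
          case False
          then have "i = 1 \<or> i \<notin> {1..N}" by auto
          then show ?thesis using False m1 unfolding S_def by (auto simp: mu'_def)
        qed
      qed
      then show ?thesis using mmin Feq by metis
    next
      case False
      then show ?thesis using mmin[OF z0K] Feq by simp
    qed
  qed
qed

end


context
  fixes N :: nat and v pr :: "nat \<Rightarrow> real" and lam sd :: real
  assumes N1: "1 \<le> N" and lam: "0 < lam" and sd: "0 < sd"
    and prpos: "\<forall>n\<in>{1..N}. 0 < pr n" and prsum: "(\<Sum>n\<in>{1..N}. pr n) = 1"
begin

lemma lse_bump:
  assumes k: "k \<in> {1..N}"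
  shows "lse N v lam (m(k := m k + t)) z - lse N v lam m z \<le> (exp (t / lam) - 1) * sm N v lam m k z"
proof -
  define a where "a n = (v n * z + m n) / lam" for n
  define S where "S = (\<Sum>n\<in>{1..N}. exp (a n))"
  define S' where "S' = (\<Sum>n\<in>{1..N}. exp ((v n * z + (m(k := m k + t)) n) / lam))"
  have Sp: "0 < S" unfolding S_def a_def by (rule sumexp_pos[OF N1])
  have S'p: "0 < S'" unfolding S'_def by (rule sumexp_pos[OF N1])
  have pt: "exp ((v n * z + (m(k := m k + t)) n) / lam) = exp (a n) + (if n = k then exp (a k) * (exp (t / lam) - 1) else 0)" for n
  proof (cases "n = k")
    case True
    have "(v k * z + (m k + t)) / lam = a k + t / lam" unfolding a_def by (simp add: add_divide_distrib)
    then show ?thesis using True by (simp add: exp_add algebra_simps)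
  next
    case False then show ?thesis by (simp add: a_def)
  qed
  have "S' = S + exp (a k) * (exp (t / lam) - 1)"
    unfolding S'_def S_def pt sum.distrib using k by simp
  then have "S' / S - 1 = (exp (t / lam) - 1) * sm N v lam m k z"
    using Sp unfolding sm_def S_def a_def by (simp add: field_simps)
  moreover have "ln (S' / S) \<le> S' / S - 1" using Sp S'p by (intro ln_le_minus_one) simp
  moreover have "ln (S' / S) = ln S' - ln S" using Sp S'p by (simp add: ln_div)
  ultimately show ?thesis unfolding lse_def S'_def[symmetric] using S_def a_def by simp
qed

lemma Phi_bounds: "n \<in> {1..N} \<Longrightarrow> 0 \<le> Phi N v lam sd m n \<and> Phi N v lam sd m n \<le> 1"
proof -
  assume n: "n \<in> {1..N}"
  have "0 \<le> Phi N v lam sd m n" unfolding Phi_def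
    using sm_pos[OF N1] by (intro Bochner_Integration.integral_nonneg) (simp add: less_imp_le)
  moreover have "Phi N v lam sd m n \<le> (LINT z|normal_meas sd. 1)" unfolding Phi_def
    using sm_le1[OF N1 n] by (intro integral_mono sm_int[OF sd N1 n] normal_int_const[OF sd]) auto
  ultimately show ?thesis using normal_integral_const[OF N1 lam sd, of 1] by simp
qed

lemma first_order:
  assumes mmin: "\<forall>mu. FF N v pr lam sd m \<le> FF N v pr lam sd mu" and k: "k \<in> {1..N}"
  shows "pr k \<le> Phi N v lam sd m k"
proof -
  let ?P = "Phi N v lam sd m k"
  have ineq: "t * pr k \<le> lam * (exp (t / lam) - 1) * ?P" for t
  proof -
    let ?mt = "m(k := m k + t)"
    have "EL N v lam sd ?mt \<le> (LINT z|normal_meas sd. lse N v lam m z + (exp (t / lam) - 1) * sm N v lam m k z)"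
      unfolding EL_def using lse_bump[OF k, of m t]
      by (intro integral_mono lse_int[OF N1 lam sd] Bochner_Integration.integrable_add
          Bochner_Integration.integrable_mult_right sm_int[OF sd N1 k]) (auto simp: algebra_simps)
    also have "\<dots> = EL N v lam sd m + (exp (t / lam) - 1) * ?P"
      unfolding EL_def Phi_def
      by (simp add: Bochner_Integration.integral_add[OF lse_int[OF N1 lam sd] Bochner_Integration.integrable_mult_right[OF sm_int[OF sd N1 k]]])
    finally have E: "EL N v lam sd ?mt \<le> EL N v lam sd m + (exp (t / lam) - 1) * ?P" .
    have "(\<Sum>n\<in>{1..N}. ?mt n * pr n) = (\<Sum>n\<in>{1..N}. m n * pr n + (if n = k then t * pr k else 0))"
      by (intro sum.cong) (auto simp: algebra_simps)
    also have "\<dots> = (\<Sum>n\<in>{1..N}. m n * pr n) + t * pr k" using k by (simp add: sum.distrib)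
    finally have Ssum: "(\<Sum>n\<in>{1..N}. ?mt n * pr n) = (\<Sum>n\<in>{1..N}. m n * pr n) + t * pr k" .
    have "FF N v pr lam sd m \<le> FF N v pr lam sd ?mt" using mmin by blast
    then have "lam * EL N v lam sd m \<le> lam * EL N v lam sd ?mt - t * pr k"
      unfolding FF_def Ssum by simp
    also have "\<dots> \<le> lam * (EL N v lam sd m + (exp (t / lam) - 1) * ?P) - t * pr k"
      using E lam by (simp add: mult_left_mono)
    finally show ?thesis by (simp add: algebra_simps)
  qed
  have pb: "0 \<le> ?P" "?P \<le> 1" using Phi_bounds[OF k] by auto
  have prk1: "pr k \<le> 1"
  proof -
    have "pr k \<le> (\<Sum>n\<in>{1..N}. pr n)" using k prpos by (intro member_le_sum) (auto simp: less_imp_le)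
    then show ?thesis using prsum by simp
  qed
  show ?thesis
  proof (rule field_le_epsilon)
    fix e :: real assume e: "0 < e"
    show "pr k \<le> ?P + e"
    proof (cases "e \<le> 1")
      case False then show ?thesis using prk1 pb by simp
    next
      case True
      have "(lam * e) * pr k \<le> lam * (exp (lam * e / lam) - 1) * ?P" by (rule ineq)
      then have "lam * (e * pr k) \<le> lam * ((exp e - 1) * ?P)" using lam by (simp add: algebra_simps)
      then have "e * pr k \<le> (exp e - 1) * ?P" using lam by simp
      also have "\<dots> \<le> (e + e^2) * ?P"
        using exp_bound[of e] e True pb by (intro mult_right_mono) auto
      finally have "e * pr k \<le> e * ((1 + e) * ?P)" by (simp add: power2_eq_square algebra_simps)
      then have "pr k \<le> (1 + e) * ?P" using e by simp
      also have "\<dots> \<le> ?P + e" using pb e by (simp add: algebra_simps)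
      finally show ?thesis .
    qed
  qed
qed

lemma exists_mu: "\<exists>mu. \<forall>n\<in>{1..N}. Phi N v lam sd mu n = pr n"
proof -
  obtain m where mmin: "\<forall>mu. FF N v pr lam sd m \<le> FF N v pr lam sd mu"
    using exists_min[OF N1 lam sd prpos prsum] by blast
  have ge: "\<forall>n\<in>{1..N}. pr n \<le> Phi N v lam sd m n"
    using first_order[OF mmin] by auto
  have "(\<Sum>n\<in>{1..N}. Phi N v lam sd m n) = (LINT z|normal_meas sd. (\<Sum>n\<in>{1..N}. sm N v lam m n z))"
    unfolding Phi_def using sm_int[OF sd N1] by (simp add: Bochner_Integration.integral_sum)
  also have "\<dots> = 1" using sm_sum[OF N1] normal_integral_const[OF N1 lam sd, of 1] by simp
  finally have s1: "(\<Sum>n\<in>{1..N}. Phi N v lam sd m n) = 1" .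
  have "(\<Sum>n\<in>{1..N}. Phi N v lam sd m n - pr n) = 0" using s1 prsum by (simp add: sum_subtractf)
  then have "\<forall>n\<in>{1..N}. Phi N v lam sd m n - pr n = 0"
    using ge by (subst (asm) sum_nonneg_eq_0_iff) auto
  then show ?thesis by auto
qed

end


lemma main:
  fixes N :: nat and v pr :: "nat \<Rightarrow> real" and lam sd :: real
  assumes N1: "1 \<le> N"
    and prpos: "\<forall>n\<in>{1..N}. 0 < pr n"
    and prsum: "(\<Sum>n\<in>{1..N}. pr n) = 1"
    and lam: "0 < lam" and sd: "0 < sd"
  shows "\<forall>q. is_density q \<longrightarrow>
    (\<exists>mu.
      (\<forall>mu'. bayes_plausible N pr (opt_post N v lam sd mu' q) q
              \<longleftrightarrow> (\<exists>c. \<forall>n\<in>{1..N}. mu' n = mu n + c))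
    \<and> objective N v pr lam sd (opt_post N v lam sd mu q) q
        = opt_value N v pr lam sd mu
    \<and> (\<forall>p' q'. signal_structure N v p' q' \<and> bayes_plausible N pr p' q' \<longrightarrow>
         objective N v pr lam sd p' q' \<le> opt_value N v pr lam sd mu)
    \<and> (\<forall>p. signal_structure N v p q \<and> bayes_plausible N pr p q
           \<and> objective N v pr lam sd p q = opt_value N v pr lam sd mu \<longrightarrow>
         (AE s in lborel. 0 < q s \<longrightarrow>
            (\<forall>n\<in>{1..N}. p n s = opt_post N v lam sd mu q n s)))
    \<and> (strict_mono_on (supp q) (cond_mean N v (opt_post N v lam sd mu q)) \<longrightarrow>
         signal_structure N v (opt_post N v lam sd mu q) q)
    \<and> distr (sig_meas q) borel (cond_mean N v (opt_post N v lam sd mu q))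
        = distr (normal_meas sd) borel (logit_mean N v lam mu))"
proof (intro allI impI)
  fix q assume q: "is_density q"
  obtain mu where mu: "\<forall>n\<in>{1..N}. Phi N v lam sd mu n = pr n"
    using exists_mu[OF N1 lam sd prpos prsum] by blast
  let ?P = "opt_post N v lam sd mu q"
  have bp: "bayes_plausible N pr ?P q" using bayes_iff[OF N1 lam sd q] mu by simp
  have pmP: "\<forall>n\<in>{1..N}. ?P n \<in> borel_measurable borel" using opt_post_meas[OF N1 lam sd q] by auto
  have pvP: "\<forall>s\<in>supp q. (\<forall>n\<in>{1..N}. 0 \<le> ?P n s) \<and> (\<Sum>n\<in>{1..N}. ?P n s) = 1"
    using opt_post_vec[OF N1 lam sd q] by auto
  show "\<exists>mu.
      (\<forall>mu'. bayes_plausible N pr (opt_post N v lam sd mu' q) q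
              \<longleftrightarrow> (\<exists>c. \<forall>n\<in>{1..N}. mu' n = mu n + c))
    \<and> objective N v pr lam sd (opt_post N v lam sd mu q) q
        = opt_value N v pr lam sd mu
    \<and> (\<forall>p' q'. signal_structure N v p' q' \<and> bayes_plausible N pr p' q' \<longrightarrow>
         objective N v pr lam sd p' q' \<le> opt_value N v pr lam sd mu)
    \<and> (\<forall>p. signal_structure N v p q \<and> bayes_plausible N pr p q
           \<and> objective N v pr lam sd p q = opt_value N v pr lam sd mu \<longrightarrow>
         (AE s in lborel. 0 < q s \<longrightarrow>
            (\<forall>n\<in>{1..N}. p n s = opt_post N v lam sd mu q n s)))
    \<and> (strict_mono_on (supp q) (cond_mean N v (opt_post N v lam sd mu q)) \<longrightarrow>
         signal_structure N v (opt_post N v lam sd mu q) q)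
    \<and> distr (sig_meas q) borel (cond_mean N v (opt_post N v lam sd mu q))
        = distr (normal_meas sd) borel (logit_mean N v lam mu)"
  proof (intro exI[of _ mu] conjI allI impI)
    fix mu'
    show "bayes_plausible N pr (opt_post N v lam sd mu' q) q \<longleftrightarrow> (\<exists>c. \<forall>n\<in>{1..N}. mu' n = mu n + c)"
    proof
      assume "bayes_plausible N pr (opt_post N v lam sd mu' q) q"
      then show "\<exists>c. \<forall>n\<in>{1..N}. mu' n = mu n + c" by (rule unique_mu[OF N1 lam sd q bp])
    next
      assume "\<exists>c. \<forall>n\<in>{1..N}. mu' n = mu n + c"
      then obtain c where c: "\<forall>n\<in>{1..N}. mu' n = mu n + c" by blast
      have "\<forall>n\<in>{1..N}. \<forall>s. opt_post N v lam sd mu' q n s = ?P n s"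
        unfolding opt_post_sm using sm_shift[OF c lam] by auto
      then show "bayes_plausible N pr (opt_post N v lam sd mu' q) q"
        using bp unfolding bayes_plausible_def by simp
    qed
  next
    show "objective N v pr lam sd ?P q = opt_value N v pr lam sd mu"
      by (rule objective_opt[OF N1 lam sd q bp])
  next
    fix p' q' assume h: "signal_structure N v p' q' \<and> bayes_plausible N pr p' q'"
    have q': "is_density q'" and pm: "\<forall>n\<in>{1..N}. p' n \<in> borel_measurable borel"
      and pv: "\<forall>s\<in>supp q'. (\<forall>n\<in>{1..N}. 0 \<le> p' n s) \<and> (\<Sum>n\<in>{1..N}. p' n s) = 1"
      using h unfolding signal_structure_def by auto
    note c = core[OF N1 lam sd q' pm pv, where mu=mu and v=v and pr=pr]
    have "0 \<le> (LINT s|lborel. (lse N v lam mu (Zs sd q' s)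
     - (\<Sum>n\<in>{1..N}. p' n s * ((v n * Zs sd q' s + mu n) / lam) - p' n s * ln (p' n s))) * q' s)"
      using c(2) h by (intro Bochner_Integration.integral_nonneg) auto
    then show "objective N v pr lam sd p' q' \<le> opt_value N v pr lam sd mu"
      using c(3) h lam by (simp add: mult_nonneg_nonneg)
  next
    fix p assume h: "signal_structure N v p q \<and> bayes_plausible N pr p q
           \<and> objective N v pr lam sd p q = opt_value N v pr lam sd mu"
    have pm: "\<forall>n\<in>{1..N}. p n \<in> borel_measurable borel"
      and pv: "\<forall>s\<in>supp q. (\<forall>n\<in>{1..N}. 0 \<le> p n s) \<and> (\<Sum>n\<in>{1..N}. p n s) = 1"
      and bpp: "bayes_plausible N pr p q"
      and eq: "objective N v pr lam sd p q = opt_value N v pr lam sd mu"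
      using h unfolding signal_structure_def by auto
    define gap where "gap s = lse N v lam mu (Zs sd q s)
     - (\<Sum>n\<in>{1..N}. p n s * ((v n * Zs sd q s + mu n) / lam) - p n s * ln (p n s))" for s
    note c' = core[OF N1 lam sd q pm pv bpp, where mu=mu and v=v]
    have c: "integrable lborel (\<lambda>s. gap s * q s)" "\<And>s. 0 \<le> gap s * q s"
      "objective N v pr lam sd p q = opt_value N v pr lam sd mu - lam * (LINT s|lborel. gap s * q s)"
      unfolding gap_def by (rule c'(1), rule c'(2), rule c'(3))
    have "lam * (LINT s|lborel. gap s * q s) = 0" using c(3) eq by simp
    then have "(LINT s|lborel. gap s * q s) = 0" using lam by simp
    then have ae: "AE s in lborel. gap s * q s = 0"
      using integral_nonneg_eq_0_iff_AE[OF c(1)] c(2) by auto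
    then show "AE s in lborel. 0 < q s \<longrightarrow> (\<forall>n\<in>{1..N}. p n s = ?P n s)"
    proof eventually_elim
      case (elim s)
      show ?case
      proof
        assume qs: "0 < q s"
        then have g0: "gap s = 0" using elim by simp
        have sq: "s \<in> supp q" using qs unfolding supp_def by simp
        have ps: "\<forall>n\<in>{1..N}. 0 \<le> p n s" "(\<Sum>n\<in>{1..N}. p n s) = 1" using pv sq by auto
        have "(\<Sum>n\<in>{1..N}. p n s * ((v n * Zs sd q s + mu n) / lam) - p n s * ln (p n s))
           = ln (\<Sum>n\<in>{1..N}. exp ((v n * Zs sd q s + mu n) / lam))"
          using g0 unfolding gap_def lse_def by linarith
        from gibbs(2)[OF ps this]
        show "\<forall>n\<in>{1..N}. p n s = ?P n s" unfolding opt_post_def Zs_def .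
      qed
    qed
  next
    assume "strict_mono_on (supp q) (cond_mean N v ?P)"
    then show "signal_structure N v ?P q"
      unfolding signal_structure_def using q pmP pvP by auto
  next
    have sets: "sets (sig_meas q) = sets borel" unfolding sig_meas_def by simp
    have Zm: "Zs sd q \<in> measurable (sig_meas q) borel"
      using Zs_meas[OF sd q] by (simp add: measurable_cong_sets[OF sets refl])
    have lm: "logit_mean N v lam mu \<in> borel_measurable borel"
      unfolding logit_mean_def[abs_def] by measurable
    have cm: "cond_mean N v ?P = (\<lambda>s. logit_mean N v lam mu (Zs sd q s))"
    proof
      fix s
      show "cond_mean N v ?P s = logit_mean N v lam mu (Zs sd q s)"
        unfolding cond_mean_def opt_post_def logit_mean_def Zs_def
        by (simp add: sum_divide_distrib)
    qed
    have "distr (sig_meas q) borel (\<lambda>s. logit_mean N v lam mu (Zs sd q s))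
        = distr (distr (sig_meas q) borel (Zs sd q)) borel (logit_mean N v lam mu)"
      using distr_distr[OF lm Zm] by (simp add: comp_def)
    also have "distr (sig_meas q) borel (Zs sd q) = normal_meas sd"
      using Z_distr[OF sd q] unfolding Zs_def[abs_def] .
    finally show "distr (sig_meas q) borel (cond_mean N v ?P) = distr (normal_meas sd) borel (logit_mean N v lam mu)"
      unfolding cm .
  qed
qed


theorem proposition5:
  fixes N :: nat and v pr :: "nat \<Rightarrow> real" and lam \<sigma>Z T :: real
  assumes "N \<ge> 2"
    and "inj_on v {1..N}"
    and "\<forall>n\<in>{1..N}. 0 < pr n"
    and "(\<Sum>n\<in>{1..N}. pr n) = 1"
    and "0 < lam" and "0 < \<sigma>Z" and "0 < T"
  shows "\<forall>q. is_density q \<longrightarrow>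
    (\<exists>mu.
      \<comment> \<open>(i) Bayes plausibility of the logit posteriors: mu exists, unique up to a common constant\<close>
      (\<forall>mu'. bayes_plausible N pr (opt_post N v lam (\<sigma>Z * sqrt T) mu' q) q
              \<longleftrightarrow> (\<exists>c. \<forall>n\<in>{1..N}. mu' n = mu n + c))
      \<comment> \<open>(i)/(ii) the logit posteriors attain the value, which bounds every feasible structure\<close>
    \<and> objective N v pr lam (\<sigma>Z * sqrt T) (opt_post N v lam (\<sigma>Z * sqrt T) mu q) q
        = opt_value N v pr lam (\<sigma>Z * sqrt T) mu
    \<and> (\<forall>p' q'. signal_structure N v p' q' \<and> bayes_plausible N pr p' q' \<longrightarrow>
         objective N v pr lam (\<sigma>Z * sqrt T) p' q' \<le> opt_value N v pr lam (\<sigma>Z * sqrt T) mu)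
      \<comment> \<open>(i) any optimal posterior with signal density q is the logit one (a.e. on the support)\<close>
    \<and> (\<forall>p. signal_structure N v p q \<and> bayes_plausible N pr p q
           \<and> objective N v pr lam (\<sigma>Z * sqrt T) p q = opt_value N v pr lam (\<sigma>Z * sqrt T) mu \<longrightarrow>
         (AE s in lborel. 0 < q s \<longrightarrow>
            (\<forall>n\<in>{1..N}. p n s = opt_post N v lam (\<sigma>Z * sqrt T) mu q n s)))
      \<comment> \<open>(ii) if E[v|s] is strictly increasing, (logit posteriors, q) is a feasible signal structure\<close>
    \<and> (strict_mono_on (supp q) (cond_mean N v (opt_post N v lam (\<sigma>Z * sqrt T) mu q)) \<longrightarrow>
         signal_structure N v (opt_post N v lam (\<sigma>Z * sqrt T) mu q) q)
      \<comment> \<open>(iii) distribution of E[v|s] equals that of the logit mean of z ~ N(0, sigma_Z^2 T)\<close>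
    \<and> distr (sig_meas q) borel (cond_mean N v (opt_post N v lam (\<sigma>Z * sqrt T) mu q))
        = distr (normal_meas (\<sigma>Z * sqrt T)) borel (logit_mean N v lam mu))"
  by (rule main) (use assms in auto)

end
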